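(* Let $\mu\in\mathbb R$, $\sigma^2>0$, let $X_1,X_2,\dots$ be i.i.d. $\mathcal N(\mu,\sigma^2)$, fix $T\in(0,\infty)$ and $M\in\mathbb N$. With $\bar X$, $S_X$, $\widehat\psi_X^*$, $\psi_0$, $U_n$, $S_m^{(n)}$, $D_m^{(n)}$ and $H_m^{(n)}$ as defined in the context, for each $m\in\{1,\dots,M\}$ there exists $r_m^{(n)}\in C([-T,T];\mathbb C)$ such that $$D_m^{(n)}(t)=\frac{\psi_0(t)}{\sqrt n}H_m^{(n)}(t)+r_m^{(n)}(t),\qquad t\in[-T,T],$$ where $\|r_m^{(n)}\|_{\infty,[-T,T]}=o_{\mathbb P}(n^{-1/2})$ and, for every $p\ge1$, the family $\{\|r_m^{(n)}\|_{\infty,[-T,T]}^p:n\in\mathbb N\}$ is uniformly integrable. Moreover, $\|D_m^{(n)}\|_{\infty,[-T,T]}=O_{\mathbb P}(n^{-1/2})$.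
   Context: For a sample $X_1,\dots,X_n$: $\bar X=\frac1n\sum_k X_k$, $S_X^2=\frac1n\sum_k(X_k-\bar X)^2$, $\widehat\psi_X(t)=\frac1n\sum_k e^{itX_k}$, and the standardized empirical characteristic function is $\widehat\psi_X^*(t)=\exp(-it\bar X/S_X)\,\widehat\psi_X(t/S_X)$. $\psi_0(t)=e^{-t^2/2}$. $U_n(t)=\sqrt n(\widehat\psi_X^*(t)-\psi_0(t))$ for $t\in[-T,T]$. For $m\in\mathbb N$, the empirical self-similarity transform is $S_m^{(n)}(t)=\big(\widehat\psi_X^*(t/\sqrt m)\big)^m$, and the iterative discrepancies are $D_m^{(n)}(t)=S_{m+1}^{(n)}(t)-S_m^{(n)}(t)$, $m=1,\dots,M$. The transformed deviation is $$H_m^{(n)}(t)=(m+1)\frac{U_n(t/\sqrt{m+1})}{\psi_0(t/\sqrt{m+1})}-m\frac{U_n(t/\sqrt m)}{\psi_0(t/\sqrt m)},\qquad t\in[-T,T].$$ $\|f\|_{\infty,[-T,T]}=\sup_{|t|\le T}|f(t)|$. *)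

theory Defs
  imports "HOL-Probability.Probability"
begin

text \<open>Samples X 0, ..., X (n-1) play the role of X_1, ..., X_n.\<close>

definition sample_mean :: "(nat \<Rightarrow> 'a \<Rightarrow> real) \<Rightarrow> nat \<Rightarrow> 'a \<Rightarrow> real" where
  "sample_mean X n \<omega> = (\<Sum>k<n. X k \<omega>) / real n"

definition sample_sd :: "(nat \<Rightarrow> 'a \<Rightarrow> real) \<Rightarrow> nat \<Rightarrow> 'a \<Rightarrow> real" where
  "sample_sd X n \<omega> = sqrt ((\<Sum>k<n. (X k \<omega> - sample_mean X n \<omega>)\<^sup>2) / real n)"

definition ecf :: "(nat \<Rightarrow> 'a \<Rightarrow> real) \<Rightarrow> nat \<Rightarrow> 'a \<Rightarrow> real \<Rightarrow> complex" where
  "ecf X n \<omega> t = (\<Sum>k<n. cis (t * X k \<omega>)) / of_nat n"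

definition std_ecf :: "(nat \<Rightarrow> 'a \<Rightarrow> real) \<Rightarrow> nat \<Rightarrow> 'a \<Rightarrow> real \<Rightarrow> complex" where
  "std_ecf X n \<omega> t =
     cis (- t * sample_mean X n \<omega> / sample_sd X n \<omega>) * ecf X n \<omega> (t / sample_sd X n \<omega>)"

definition psi0 :: "real \<Rightarrow> complex" where
  "psi0 t = complex_of_real (exp (- (t\<^sup>2) / 2))"

definition U_proc :: "(nat \<Rightarrow> 'a \<Rightarrow> real) \<Rightarrow> nat \<Rightarrow> 'a \<Rightarrow> real \<Rightarrow> complex" where
  "U_proc X n \<omega> t = complex_of_real (sqrt (real n)) * (std_ecf X n \<omega> t - psi0 t)"

definition S_trans :: "(nat \<Rightarrow> 'a \<Rightarrow> real) \<Rightarrow> nat \<Rightarrow> nat \<Rightarrow> 'a \<Rightarrow> real \<Rightarrow> complex" where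
  "S_trans X m n \<omega> t = (std_ecf X n \<omega> (t / sqrt (real m))) ^ m"

definition D_disc :: "(nat \<Rightarrow> 'a \<Rightarrow> real) \<Rightarrow> nat \<Rightarrow> nat \<Rightarrow> 'a \<Rightarrow> real \<Rightarrow> complex" where
  "D_disc X m n \<omega> t = S_trans X (m + 1) n \<omega> t - S_trans X m n \<omega> t"

definition H_dev :: "(nat \<Rightarrow> 'a \<Rightarrow> real) \<Rightarrow> nat \<Rightarrow> nat \<Rightarrow> 'a \<Rightarrow> real \<Rightarrow> complex" where
  "H_dev X m n \<omega> t =
     of_nat (m + 1) * U_proc X n \<omega> (t / sqrt (real (m + 1))) / psi0 (t / sqrt (real (m + 1)))
     - of_nat m * U_proc X n \<omega> (t / sqrt (real m)) / psi0 (t / sqrt (real m))"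

definition sup_norm_on :: "real \<Rightarrow> (real \<Rightarrow> complex) \<Rightarrow> real" where
  "sup_norm_on T f = (SUP t\<in>{-T..T}. norm (f t))"

definition unif_integrable :: "'a measure \<Rightarrow> ('i \<Rightarrow> 'a \<Rightarrow> real) \<Rightarrow> 'i set \<Rightarrow> bool" where
  "unif_integrable M F I \<longleftrightarrow>
     (\<forall>i\<in>I. integrable M (F i)) \<and>
     (\<forall>\<epsilon>>0. \<exists>K. \<forall>i\<in>I.
        (\<integral>\<omega>. \<bar>F i \<omega>\<bar> * indicator {\<omega>\<in>space M. \<bar>F i \<omega>\<bar> > K} \<omega> \<partial>M) \<le> \<epsilon>)"

definition small_oP :: "'a measure \<Rightarrow> (nat \<Rightarrow> 'a \<Rightarrow> real) \<Rightarrow> (nat \<Rightarrow> real) \<Rightarrow> bool" where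
  "small_oP M Z a \<longleftrightarrow>
     (\<forall>\<epsilon>>0. ((\<lambda>n. measure M {\<omega>\<in>space M. \<bar>Z n \<omega> / a n\<bar> > \<epsilon>}) \<longlongrightarrow> 0) sequentially)"

definition big_OP :: "'a measure \<Rightarrow> (nat \<Rightarrow> 'a \<Rightarrow> real) \<Rightarrow> (nat \<Rightarrow> real) \<Rightarrow> bool" where
  "big_OP M Z a \<longleftrightarrow>
     (\<forall>\<epsilon>>0. \<exists>K. \<forall>\<^sub>F n in sequentially.
        measure M {\<omega>\<in>space M. \<bar>Z n \<omega> / a n\<bar> > K} < \<epsilon>)"

end

theory Submission
  imports Defs
begin

definition nm :: "nat \<Rightarrow> real" where
  "nm j = (if even j then fact j / (2 ^ (j div 2) * fact (j div 2)) else 0)"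

lemma nm_nonneg: "nm j \<ge> 0" by (simp add: nm_def)

lemma nm_even: "nm (2*k) = fact (2*k) / (2^k * fact k)" by (simp add: nm_def)
lemma nm_odd: "nm (2*k+1) = 0" by (simp add: nm_def)

lemma nm_sums:
  fixes z :: "'a::{real_normed_field,banach}"
  shows "(\<lambda>j. of_real (nm j / fact j) * z^j) sums exp (z^2/2)"
proof -
  let ?f = "\<lambda>j. of_real (nm j / fact j) * z^j :: 'a"
  have "(\<lambda>k. (z^2/2)^k /\<^sub>R fact k) sums exp (z^2/2)" by (rule exp_converges)
  moreover have "?f (2*k) = (z^2/2)^k /\<^sub>R fact k" for k
  proof -
    have r: "nm (2*k) / fact (2*k) = 1 / (2^k * fact k)" by (simp add: nm_even)
    have "?f (2*k) = of_real (1 / (2^k * fact k)) * (z^2)^k" by (simp add: r power_mult)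
    also have "\<dots> = (z^2/2)^k /\<^sub>R fact k"
      by (simp add: scaleR_conv_of_real power_divide divide_simps)
    finally show ?thesis .
  qed
  ultimately have "(\<lambda>k. ?f (2*k)) sums exp (z^2/2)" by simp
  moreover have "strict_mono (\<lambda>k::nat. 2*k)" by (rule strict_monoI) simp
  moreover have "?f n = 0" if "n \<notin> range (\<lambda>k::nat. 2*k)" for n
  proof -
    from that have "odd n" by (metis evenE rangeI)
    then show ?thesis by (simp add: nm_def)
  qed
  ultimately show ?thesis using sums_mono_reindex[of "\<lambda>k. 2*k" ?f] by simp
qed

lemma cis_sums:
  "(\<lambda>j. (\<i> * of_real u)^j * of_real (y^j) / fact j) sums cis (u*y)"
proof -
  have "(\<lambda>j. (\<i> * of_real (u*y))^j /\<^sub>R fact j) sums exp (\<i> * of_real (u*y))" by (rule exp_converges)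
  then show ?thesis
    by (simp add: cis_conv_exp scaleR_conv_of_real power_mult_distrib field_simps)
qed

lemma nm_2: "nm 2 = 1" and nm_1: "nm 1 = 0" and nm_0: "nm 0 = 1"
  by (simp_all add: nm_def)

lemma aux_frac: "x \<ge> 0 \<Longrightarrow> b > 0 \<Longrightarrow> (2*x+2)*(2*x+1)*a / (2*(x+1)*b) = (2*x+1) * (a/(b::real))"
proof -
  assume h: "x \<ge> 0" "b > 0"
  then have d: "2*(x+1)*b \<noteq> 0" by simp
  have "(2*x+2)*(2*x+1)*a = (2*x+1) * (a/b) * (2*(x+1)*b)" using h by (simp add: field_simps)
  then show ?thesis using d by (simp add: nonzero_divide_eq_eq)
qed

lemma nm_2Suc: "nm (2 * Suc j) = (2 * real j + 1) * nm (2*j)"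
proof -
  have "fact (2 * Suc j) = (2 * real j + 2) * (2 * real j + 1) * (fact (2*j) :: real)"
    by (simp add: algebra_simps)
  moreover have "(2::real)^(Suc j) * fact (Suc j) = 2 * (real j + 1) * (2^j * fact j)"
    by (simp add: algebra_simps)
  moreover have "(2::real)^j * fact j > 0" by simp
  ultimately show ?thesis
    by (simp only: nm_even aux_frac[of "real j"])
qed

definition mh :: "(nat \<Rightarrow> real) \<Rightarrow> nat \<Rightarrow> nat \<Rightarrow> real" where
  "mh y n j = (\<Sum>k<n. y k ^ j) / real n"
definition Vd :: "(nat \<Rightarrow> real) \<Rightarrow> nat \<Rightarrow> nat \<Rightarrow> real" where
  "Vd y n j = \<bar>mh y n j - nm j\<bar>"
definition Wd :: "real \<Rightarrow> (nat \<Rightarrow> real) \<Rightarrow> nat \<Rightarrow> real" where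
  "Wd a y n = (\<Sum>j. a^j / fact j * Vd y n j)"

lemma mh_abs_le: "\<bar>mh y n j\<bar> \<le> (\<Sum>k<n. \<bar>y k\<bar> ^ j)"
proof (cases "n = 0")
  case True then show ?thesis by (simp add: mh_def)
next
  case False
  have "\<bar>mh y n j\<bar> = \<bar>\<Sum>k<n. y k ^ j\<bar> / real n" by (simp add: mh_def)
  also have "\<dots> \<le> \<bar>\<Sum>k<n. y k ^ j\<bar>"
  proof -
    have "real n \<ge> 1" using False by simp
    then have "\<bar>\<Sum>k<n. y k ^ j\<bar> / real n \<le> \<bar>\<Sum>k<n. y k ^ j\<bar> / 1"
      by (intro divide_left_mono) auto
    then show ?thesis by simp
  qed
  also have "\<dots> \<le> (\<Sum>k<n. \<bar>y k\<bar> ^ j)" by (rule order_trans[OF sum_abs]) (simp add: power_abs)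
  finally show ?thesis .
qed

lemma summable_Vd:
  assumes "a \<ge> 0"
  shows "summable (\<lambda>j. a^j / fact j * Vd y n j)"
proof (rule summable_comparison_test)
  have s1: "summable (\<lambda>j. \<Sum>k<n. inverse (fact j) * (a * \<bar>y k\<bar>)^j)"
    by (intro summable_sum summable_exp)
  have "(\<lambda>j. of_real (nm j / fact j) * a^j) sums exp (a^2/2)" by (rule nm_sums)
  then have s2: "summable (\<lambda>j. nm j / fact j * a^j)" by (simp add: sums_iff)
  show "summable (\<lambda>j. (\<Sum>k<n. inverse (fact j) * (a * \<bar>y k\<bar>)^j) + nm j / fact j * a^j)"
    by (intro summable_add s1 s2)
  show "\<exists>N. \<forall>j\<ge>N. norm (a^j / fact j * Vd y n j) \<le> (\<Sum>k<n. inverse (fact j) * (a * \<bar>y k\<bar>)^j) + nm j / fact j * a^j"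
  proof (intro exI allI impI)
    fix j :: nat
    have v: "Vd y n j \<le> (\<Sum>k<n. \<bar>y k\<bar> ^ j) + nm j"
      using mh_abs_le[of y n j] nm_nonneg[of j] by (simp add: Vd_def)
    have c: "a^j / fact j \<ge> 0" using assms by simp
    have "norm (a^j / fact j * Vd y n j) = a^j / fact j * Vd y n j"
      using assms by (simp add: Vd_def)
    also have "\<dots> \<le> a^j / fact j * ((\<Sum>k<n. \<bar>y k\<bar> ^ j) + nm j)"
      by (rule mult_left_mono[OF v c])
    also have "\<dots> = (\<Sum>k<n. inverse (fact j) * (a * \<bar>y k\<bar>)^j) + nm j / fact j * a^j"
      by (simp add: sum_distrib_left power_mult_distrib field_simps)
    finally show "norm (a^j / fact j * Vd y n j) \<le> (\<Sum>k<n. inverse (fact j) * (a * \<bar>y k\<bar>)^j) + nm j / fact j * a^j" .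
  qed
qed

lemma Wd_nonneg: "a \<ge> 0 \<Longrightarrow> Wd a y n \<ge> 0"
  unfolding Wd_def by (rule suminf_nonneg[OF summable_Vd]) (auto simp: Vd_def)

lemma Wd_term_le: "a \<ge> 0 \<Longrightarrow> a^j / fact j * Vd y n j \<le> Wd a y n"
proof -
  assume a: "a \<ge> 0"
  have "sum (\<lambda>j. a^j/fact j * Vd y n j) {j} \<le> (\<Sum>j. a^j/fact j * Vd y n j)"
    by (rule sum_le_suminf[OF summable_Vd[OF a]]) (use a in \<open>auto simp: Vd_def\<close>)
  then show ?thesis unfolding Wd_def by simp
qed

lemma cmod_of_real_diff: "cmod (complex_of_real a - complex_of_real b) = \<bar>a - b\<bar>"
  by (metis norm_of_real of_real_diff)

lemma ecf_dev_bound: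
  assumes "\<bar>u\<bar> \<le> a"
  shows "cmod ((\<Sum>k<n. cis (u * y k)) / of_nat n - complex_of_real (exp (-(u\<^sup>2)/2))) \<le> Wd a y n"
proof -
  have a0: "a \<ge> 0" using assms by linarith
  define s where "s j = (\<i> * of_real u)^j / fact j * of_real (mh y n j - nm j)" for j
  have A: "(\<lambda>j. (\<Sum>k<n. (\<i> * of_real u)^j * of_real (y k^j) / fact j) / of_nat n) sums
      ((\<Sum>k<n. cis (u * y k)) / of_nat n)"
    by (intro sums_divide sums_sum cis_sums)
  have B: "(\<lambda>j. of_real (nm j / fact j) * (\<i> * of_real u)^j) sums complex_of_real (exp (-(u\<^sup>2)/2))"
  proof -
    have "(\<i> * complex_of_real u)^2/2 = complex_of_real (-(u\<^sup>2)/2)" by (simp add: power_mult_distrib)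
    then have "exp ((\<i> * complex_of_real u)^2/2) = complex_of_real (exp (-(u\<^sup>2)/2))"
      by (simp only: exp_of_real)
    then show ?thesis using nm_sums[of "\<i> * of_real u"] by simp
  qed
  have "s = (\<lambda>j. (\<Sum>k<n. (\<i> * of_real u)^j * of_real (y k^j) / fact j) / of_nat n
              - of_real (nm j / fact j) * (\<i> * of_real u)^j)"
  proof
    fix j
    let ?c = "(\<i> * of_real u)^j :: complex" and ?f = "fact j :: complex"
    have e1: "(\<Sum>k<n. ?c * of_real (y k^j) / ?f) = ?c / ?f * of_real (\<Sum>k<n. y k^j)"
      by (simp add: sum_divide_distrib sum_distrib_left)
    have e2: "complex_of_real (mh y n j - nm j) = of_real (\<Sum>k<n. y k^j) / of_nat n - of_real (nm j)"
      by (simp add: mh_def)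
    have e3: "of_real (nm j / fact j) * ?c = ?c / ?f * of_real (nm j)"
      by simp
    show "s j = (\<Sum>k<n. ?c * of_real (y k^j) / ?f) / of_nat n - of_real (nm j / fact j) * ?c"
      unfolding e1 e3 s_def e2 by (simp add: right_diff_distrib)
  qed
  then have S: "s sums ((\<Sum>k<n. cis (u * y k)) / of_nat n - complex_of_real (exp (-(u\<^sup>2)/2)))"
    using sums_diff[OF A B] by simp
  have ns: "norm (s j) = \<bar>u\<bar>^j / fact j * Vd y n j" for j
    by (simp add: s_def Vd_def norm_mult norm_divide norm_power cmod_of_real_diff)
  have le: "norm (s j) \<le> a^j / fact j * Vd y n j" for j
    unfolding ns by (intro mult_right_mono divide_right_mono power_mono) (use assms in \<open>auto simp: Vd_def\<close>)
  have sn: "summable (\<lambda>j. norm (s j))"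
  proof (rule summable_comparison_test[OF _ summable_Vd[OF a0]])
    show "\<exists>N. \<forall>j\<ge>N. norm (norm (s j)) \<le> a^j / fact j * Vd y n j"
      using le by (intro exI[of _ 0]) simp
  qed
  have "cmod ((\<Sum>k<n. cis (u * y k)) / of_nat n - complex_of_real (exp (-(u\<^sup>2)/2))) = norm (suminf s)"
    using S by (simp add: sums_iff)
  also have "\<dots> \<le> (\<Sum>j. norm (s j))" by (rule summable_norm[OF sn])
  also have "\<dots> \<le> Wd a y n" unfolding Wd_def
    by (intro suminf_le le sn summable_Vd a0)
  finally show ?thesis .
qed

lemma cis_minus_1_le: "cmod (cis a - 1) \<le> \<bar>a\<bar>"
  using iexp_approx1[of a 0] by (simp add: cis_conv_exp)

lemma x_exp_le: "\<bar>x\<bar> * exp (-(x\<^sup>2)/2) \<le> (1::real)"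
proof -
  have "\<bar>x\<bar> \<le> 1 + x\<^sup>2/2"
  proof -
    have "0 \<le> (\<bar>x\<bar> - 1)\<^sup>2" by simp
    then show ?thesis by (simp add: power2_eq_square algebra_simps abs_mult_self_eq)
  qed
  also have "\<dots> \<le> exp (x\<^sup>2/2)" by (rule exp_ge_add_one_self)
  finally have "\<bar>x\<bar> \<le> exp (x\<^sup>2/2)" .
  then have "\<bar>x\<bar> * exp (-(x\<^sup>2)/2) \<le> exp (x\<^sup>2/2) * exp (-(x\<^sup>2)/2)"
    by (intro mult_right_mono) auto
  also have "\<dots> = 1" by (simp add: exp_add[symmetric])
  finally show ?thesis .
qed

lemma gauss_lip: "\<bar>exp (-(u\<^sup>2)/2) - exp (-(t\<^sup>2)/2)\<bar> \<le> \<bar>u - (t::real)\<bar>"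
proof -
  have key: "\<bar>exp (-(b\<^sup>2)/2) - exp (-(a\<^sup>2)/2)\<bar> \<le> b - a" if "a < b" for a b :: real
  proof -
    have "\<And>x. DERIV (\<lambda>x. exp (-(x\<^sup>2)/2)) x :> exp (-(x\<^sup>2)/2) * (- x)"
      by (auto intro!: derivative_eq_intros simp: power2_eq_square)
    from MVT2[OF that this] obtain z where
      "exp (-(b\<^sup>2)/2) - exp (-(a\<^sup>2)/2) = (b - a) * (exp (-(z\<^sup>2)/2) * (- z))" by blast
    then have "\<bar>exp (-(b\<^sup>2)/2) - exp (-(a\<^sup>2)/2)\<bar> = (b - a) * (\<bar>z\<bar> * exp (-(z\<^sup>2)/2))"
      using that by (simp add: abs_mult)
    also have "\<dots> \<le> (b - a) * 1" using that x_exp_le[of z] by (intro mult_left_mono) auto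
    finally show ?thesis by simp
  qed
  show ?thesis
  proof (cases u t rule: linorder_cases)
    case less then show ?thesis using key[of u t] by (simp add: abs_minus_commute)
  next
    case equal then show ?thesis by simp
  next
    case greater then show ?thesis using key[of t u] by simp
  qed
qed

lemma psi0_lip: "cmod (psi0 u - psi0 t) \<le> \<bar>u - t\<bar>"
  unfolding psi0_def using gauss_lip[of u t] by (simp add: cmod_of_real_diff)

lemma psi0_norm_le1: "cmod (psi0 t) \<le> 1"
  unfolding psi0_def by simp

lemma psi0_ge: "\<bar>t\<bar> \<le> T \<Longrightarrow> exp (-(T\<^sup>2)/2) \<le> cmod (psi0 t)"
proof -
  assume h: "\<bar>t\<bar> \<le> T"
  have "\<bar>t\<bar>^2 \<le> T^2" by (rule power_mono[OF h]) simp
  then show ?thesis unfolding psi0_def by simp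
qed

lemma psi0_nonzero: "psi0 t \<noteq> 0"
  unfolding psi0_def by simp

lemma psi0_pow: "m > 0 \<Longrightarrow> psi0 (t / sqrt (real m)) ^ m = psi0 t"
proof -
  assume m: "m > 0"
  have "(t / sqrt (real m))\<^sup>2 = t\<^sup>2 / real m" by (simp add: power_divide)
  then have "real m * (-((t / sqrt (real m))\<^sup>2)/2) = -(t\<^sup>2)/2" using m by simp
  then have e: "exp (-((t / sqrt (real m))\<^sup>2)/2) ^ m = exp (-(t\<^sup>2)/2)"
    by (metis exp_of_nat_mult)
  show ?thesis unfolding psi0_def of_real_power[symmetric] e ..
qed

lemma sum_sq_dev:
  fixes y :: "nat \<Rightarrow> real"
  assumes n: "n \<ge> 1"
  shows "(\<Sum>k<n. (y k - (\<Sum>k<n. y k)/n)\<^sup>2)/n = (\<Sum>k<n. (y k)\<^sup>2)/n - ((\<Sum>k<n. y k)/n)\<^sup>2"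
proof -
  define c where "c = (\<Sum>k<n. y k)/n"
  have sc: "(\<Sum>k<n. y k) = n * c" using n by (simp add: c_def)
  have "(\<Sum>k<n. (y k - c)\<^sup>2) = (\<Sum>k<n. (y k)\<^sup>2 - 2*c*y k + c\<^sup>2)"
    by (intro sum.cong refl) (simp add: power2_diff mult_ac)
  also have "\<dots> = (\<Sum>k<n. (y k)\<^sup>2) - 2*c*(\<Sum>k<n. y k) + n*c\<^sup>2"
    by (simp add: sum.distrib sum_subtractf sum_distrib_left)
  also have "\<dots> = (\<Sum>k<n. (y k)\<^sup>2) - n * c\<^sup>2" unfolding sc by (simp add: power2_eq_square)
  finally have "(\<Sum>k<n. (y k - c)\<^sup>2)/n = (\<Sum>k<n. (y k)\<^sup>2)/n - c\<^sup>2"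
    using n by (simp add: diff_divide_distrib)
  then show ?thesis by (simp add: c_def)
qed

lemma std_ecf_rep:
  fixes X :: "nat \<Rightarrow> 'a \<Rightarrow> real"
  assumes \<sigma>: "\<sigma> > 0" and n: "n \<ge> 1"
    and s: "(\<Sum>k<n. ((X k \<omega> - \<mu>)/\<sigma>)\<^sup>2)/n - ((\<Sum>k<n. (X k \<omega> - \<mu>)/\<sigma>)/n)\<^sup>2 > 0"
  defines "y \<equiv> (\<lambda>k. (X k \<omega> - \<mu>)/\<sigma>)"
  defines "yb \<equiv> (\<Sum>k<n. y k)/n"
  defines "s \<equiv> sqrt ((\<Sum>k<n. (y k)\<^sup>2)/n - yb\<^sup>2)"
  shows "std_ecf X n \<omega> t = cis (- t * yb / s) * ((\<Sum>k<n. cis ((t/s) * y k)) / of_nat n)"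
proof -
  have xe: "X k \<omega> = \<mu> + \<sigma> * y k" for k using \<sigma> by (simp add: y_def)
  have sy: "(\<Sum>k<n. y k) = n * yb" using n by (simp add: yb_def)
  have mean: "sample_mean X n \<omega> = \<mu> + \<sigma> * yb"
  proof -
    have "(\<Sum>k<n. X k \<omega>) = n * \<mu> + \<sigma> * (\<Sum>k<n. y k)"
      by (simp add: xe sum.distrib sum_distrib_left)
    then show ?thesis using n by (simp add: sample_mean_def sy field_simps)
  qed
  have s0: "s > 0" using s by (simp add: s_def y_def yb_def)
  have sd: "sample_sd X n \<omega> = \<sigma> * s"
  proof -
    have "(\<Sum>k<n. (X k \<omega> - sample_mean X n \<omega>)\<^sup>2) = \<sigma>\<^sup>2 * (\<Sum>k<n. (y k - yb)\<^sup>2)"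
      by (simp add: mean xe sum_distrib_left power_mult_distrib[symmetric] right_diff_distrib)
    then have "(\<Sum>k<n. (X k \<omega> - sample_mean X n \<omega>)\<^sup>2) / n = \<sigma>\<^sup>2 * ((\<Sum>k<n. (y k - yb)\<^sup>2) / n)"
      by simp
    also have "\<dots> = \<sigma>\<^sup>2 * ((\<Sum>k<n. (y k)\<^sup>2)/n - yb\<^sup>2)"
      using sum_sq_dev[OF n, of y] by (simp add: yb_def)
    finally have "(\<Sum>k<n. (X k \<omega> - sample_mean X n \<omega>)\<^sup>2) / n = \<sigma>\<^sup>2 * ((\<Sum>k<n. (y k)\<^sup>2)/n - yb\<^sup>2)" .
    then show ?thesis using \<sigma> by (simp add: sample_sd_def s_def real_sqrt_mult)
  qed
  have "std_ecf X n \<omega> t = (\<Sum>k<n. cis (t * (y k - yb) / s)) / of_nat n"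
  proof -
    have "std_ecf X n \<omega> t = (\<Sum>k<n. cis (- t * (\<mu> + \<sigma> * yb) / (\<sigma> * s)) * cis (t / (\<sigma> * s) * X k \<omega>)) / of_nat n"
      unfolding std_ecf_def ecf_def mean sd by (simp add: sum_distrib_left)
    also have "\<dots> = (\<Sum>k<n. cis (t * (y k - yb) / s)) / of_nat n"
    proof -
      have "- t * (\<mu> + \<sigma> * yb) / (\<sigma> * s) + t / (\<sigma> * s) * X k \<omega> = t * (y k - yb) / s" for k
        using \<sigma> s0 by (simp add: xe field_simps)
      then show ?thesis by (simp add: cis_mult)
    qed
    finally show ?thesis .
  qed
  also have "\<dots> = cis (- t * yb / s) * ((\<Sum>k<n. cis ((t/s) * y k)) / of_nat n)"
  proof -
    have "- t * yb / s + t / s * y k = t * (y k - yb) / s" for k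
      using s0 by (simp add: field_simps)
    then show ?thesis by (simp add: sum_distrib_left cis_mult)
  qed
  finally show ?thesis .
qed

lemma std_ecf_bound:
  fixes X :: "nat \<Rightarrow> 'a \<Rightarrow> real"
  assumes \<sigma>: "\<sigma> > 0" and n: "n \<ge> 1" and T: "T > 0"
    and W: "Wd (2*T) (\<lambda>k. (X k \<omega> - \<mu>)/\<sigma>) n \<le> min (T/2) (T\<^sup>2/2)"
    and t: "\<bar>t\<bar> \<le> T"
  shows "cmod (std_ecf X n \<omega> t - psi0 t) \<le> (3 + 1/T) * Wd (2*T) (\<lambda>k. (X k \<omega> - \<mu>)/\<sigma>) n"
proof -
  define y where "y = (\<lambda>k. (X k \<omega> - \<mu>)/\<sigma>)"
  define w where "w = Wd (2*T) y n"
  define yb where "yb = (\<Sum>k<n. y k)/n"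
  define q where "q = (\<Sum>k<n. (y k)\<^sup>2)/n"
  have w1: "w \<le> T/2" and w2: "w \<le> T\<^sup>2/2" using W by (auto simp: w_def y_def)
  have T0: "2*T \<ge> 0" using T by simp
  have "(2*T)^1 / fact 1 * Vd y n 1 \<le> w" unfolding w_def by (rule Wd_term_le[OF T0])
  then have V1: "2*T * \<bar>yb\<bar> \<le> w" by (simp add: Vd_def mh_def nm_def yb_def abs_divide)
  have "(2*T)^2 / fact 2 * Vd y n 2 \<le> w" unfolding w_def by (rule Wd_term_le[OF T0])
  then have V2: "2*T\<^sup>2 * \<bar>q - 1\<bar> \<le> w"
    by (simp add: Vd_def mh_def nm_2 q_def power2_eq_square mult_ac)
  have yb4: "\<bar>yb\<bar> \<le> 1/4"
  proof -
    have "2*T*\<bar>yb\<bar> \<le> 2*T*(1/4)" using V1 w1 by simp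
    then show ?thesis using T by simp
  qed
  have q4: "\<bar>q - 1\<bar> \<le> 1/4"
  proof -
    have "2*T\<^sup>2*\<bar>q - 1\<bar> \<le> 2*T\<^sup>2*(1/4)" using V2 w2 by simp
    then show ?thesis using T by simp
  qed
  have ybsq: "yb\<^sup>2 \<le> \<bar>yb\<bar>"
  proof -
    have "\<bar>yb\<bar> * \<bar>yb\<bar> \<le> 1 * \<bar>yb\<bar>" using yb4 by (intro mult_right_mono) auto
    then show ?thesis by (simp add: power2_eq_square abs_mult_self_eq)
  qed
  define s where "s = sqrt (q - yb\<^sup>2)"
  have sq: "q - yb\<^sup>2 > 1/4" using yb4 q4 ybsq by linarith
  have s2: "s\<^sup>2 = q - yb\<^sup>2" using sq by (simp add: s_def)
  have shalf: "s > 1/2"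
  proof -
    have "sqrt (1/4) < s" unfolding s_def using sq by (intro real_sqrt_less_mono)
    moreover have "sqrt (1/4) = (1/2::real)" by (simp add: real_sqrt_divide)
    ultimately show ?thesis by simp
  qed
  have s0: "s > 0" using shalf by simp
  have rep: "std_ecf X n \<omega> t = cis (- t * yb / s) * ((\<Sum>k<n. cis ((t/s) * y k)) / of_nat n)"
  proof -
    have pos: "(\<Sum>k<n. ((X k \<omega> - \<mu>)/\<sigma>)\<^sup>2)/n - ((\<Sum>k<n. (X k \<omega> - \<mu>)/\<sigma>)/n)\<^sup>2 > 0"
      using sq unfolding q_def yb_def y_def by linarith
    show ?thesis unfolding s_def q_def yb_def y_def by (rule std_ecf_rep[where X=X and \<omega>=\<omega> and \<mu>=\<mu>, OF \<sigma> n pos])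
  qed
  define u where "u = t / s"
  define \<alpha> where "\<alpha> = - t * yb / s"
  define E where "E = (\<Sum>k<n. cis (u * y k)) / of_nat n"
  have invs: "1/s \<le> 2" using shalf s0 by (simp add: divide_simps)
  have tabs: "\<bar>t\<bar> / s \<le> 2 * T"
  proof -
    have "\<bar>t\<bar> / s = \<bar>t\<bar> * (1/s)" by simp
    also have "\<dots> \<le> T * 2" using t invs T s0 by (intro mult_mono) auto
    finally show ?thesis by simp
  qed
  have u2: "\<bar>u\<bar> \<le> 2*T" using tabs s0 by (simp add: u_def abs_divide)
  have b1: "cmod (E - psi0 u) \<le> w"
    unfolding E_def w_def psi0_def by (rule ecf_dev_bound[OF u2])
  have b2: "\<bar>\<alpha>\<bar> \<le> w"
  proof -
    have "\<bar>\<alpha>\<bar> = \<bar>t\<bar> / s * \<bar>yb\<bar>" using s0 by (simp add: \<alpha>_def abs_mult abs_divide)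
    also have "\<dots> \<le> 2 * T * \<bar>yb\<bar>" using tabs by (intro mult_right_mono) auto
    finally show ?thesis using V1 by simp
  qed
  have b3: "\<bar>u - t\<bar> \<le> w / T + w"
  proof -
    have one_s: "\<bar>1 - s\<bar> \<le> \<bar>1 - s\<^sup>2\<bar>"
    proof -
      have "1 - s\<^sup>2 = (1 - s) * (1 + s)" by (simp add: power2_eq_square algebra_simps)
      then have "\<bar>1 - s\<^sup>2\<bar> = \<bar>1 - s\<bar> * \<bar>1 + s\<bar>" by (simp add: abs_mult)
      also have "\<bar>1 + s\<bar> = 1 + s" using s0 by simp
      finally have "\<bar>1 - s\<^sup>2\<bar> = \<bar>1 - s\<bar> * (1 + s)" .
      also have "\<dots> \<ge> \<bar>1 - s\<bar> * 1" using s0 by (intro mult_left_mono) auto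
      finally show ?thesis by simp
    qed
    have "\<bar>1 - s\<^sup>2\<bar> \<le> \<bar>q - 1\<bar> + \<bar>yb\<bar>" unfolding s2
      using ybsq abs_ge_self[of "q-1"] abs_ge_minus_self[of "q-1"] zero_le_power2[of yb] abs_ge_zero[of yb]
      by (intro abs_leI) linarith+
    have "u - t = t * (1 - s) / s" using s0 by (simp add: u_def field_simps)
    then have "\<bar>u - t\<bar> = \<bar>t\<bar> / s * \<bar>1 - s\<bar>" using s0 by (simp add: abs_mult abs_divide)
    also have "\<dots> \<le> 2 * T * (\<bar>q - 1\<bar> + \<bar>yb\<bar>)"
      using tabs one_s \<open>\<bar>1 - s\<^sup>2\<bar> \<le> \<bar>q - 1\<bar> + \<bar>yb\<bar>\<close> T by (intro mult_mono) auto
    also have "\<dots> = (2*T\<^sup>2*\<bar>q - 1\<bar>) / T + 2*T*\<bar>yb\<bar>" using T by (simp add: field_simps power2_eq_square)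
    also have "\<dots> \<le> w / T + w" using V1 V2 T by (intro add_mono divide_right_mono) auto
    finally show ?thesis .
  qed
  have "std_ecf X n \<omega> t - psi0 t = cis \<alpha> * (E - psi0 u) + (cis \<alpha> - 1) * psi0 u + (psi0 u - psi0 t)"
  proof -
    have rep': "std_ecf X n \<omega> t = cis \<alpha> * E" unfolding \<alpha>_def E_def u_def by (rule rep)
    show ?thesis unfolding rep' by (simp add: algebra_simps)
  qed
  then have "cmod (std_ecf X n \<omega> t - psi0 t) \<le> cmod (cis \<alpha> * (E - psi0 u)) + cmod ((cis \<alpha> - 1) * psi0 u) + cmod (psi0 u - psi0 t)"
    by (simp only:) (rule order_trans[OF norm_triangle_ineq add_right_mono[OF norm_triangle_ineq]])
  also have "\<dots> \<le> w + \<bar>\<alpha>\<bar> * 1 + \<bar>u - t\<bar>"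
  proof (intro add_mono)
    show "cmod (cis \<alpha> * (E - psi0 u)) \<le> w" using b1 by (simp add: norm_mult)
    show "cmod ((cis \<alpha> - 1) * psi0 u) \<le> \<bar>\<alpha>\<bar> * 1"
      unfolding norm_mult by (intro mult_mono cis_minus_1_le psi0_norm_le1) auto
    show "cmod (psi0 u - psi0 t) \<le> \<bar>u - t\<bar>" by (rule psi0_lip)
  qed
  also have "\<dots> \<le> (3 + 1/T) * w" using b2 b3 T by (simp add: algebra_simps)
  finally show ?thesis by (simp add: w_def y_def)
qed

lemma P_bound:
  fixes e :: complex
  assumes "cmod e \<le> B"
  shows "cmod ((1+e)^k - 1 - of_nat k * e) \<le> real k ^ 2 * (1+B)^k * (cmod e)^2"
proof (induction k)
  case 0 then show ?case by simp
next
  case (Suc k)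
  have B0: "B \<ge> 0" using assms norm_ge_zero order_trans by blast
  have eq: "(1+e)^Suc k - 1 - of_nat (Suc k) * e = (1+e) * ((1+e)^k - 1 - of_nat k * e) + of_nat k * e^2"
    by (simp add: algebra_simps power2_eq_square)
  have n1: "cmod (1+e) \<le> 1 + B" using assms norm_triangle_ineq[of 1 e] by simp
  have "cmod ((1+e)^Suc k - 1 - of_nat (Suc k) * e) \<le> cmod (1+e) * cmod ((1+e)^k - 1 - of_nat k * e) + real k * (cmod e)^2"
    unfolding eq by (rule order_trans[OF norm_triangle_ineq]) (simp add: norm_mult norm_power)
  also have "\<dots> \<le> (1+B) * (real k ^ 2 * (1+B)^k * (cmod e)^2) + real k * (cmod e)^2"
    using Suc.IH n1 B0 by (intro add_mono mult_mono) auto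
  also have "\<dots> \<le> real (Suc k) ^ 2 * (1+B)^Suc k * (cmod e)^2"
  proof -
    have p1: "1 \<le> (1+B)^Suc k" using B0 by (intro one_le_power) simp
    have "real k * (cmod e)^2 \<le> (2 * real k + 1) * (1+B)^Suc k * (cmod e)^2"
    proof -
      have "real k * 1 \<le> (2 * real k + 1) * (1+B)^Suc k" using p1
        by (intro mult_mono) auto
      then show ?thesis by (intro mult_right_mono) auto
    qed
    then show ?thesis by (simp add: power2_eq_square algebra_simps)
  qed
  finally show ?case .
qed

lemma std_ecf_norm: "cmod (std_ecf X n \<omega> t) \<le> 1"
proof -
  have sb: "cmod (\<Sum>k<n. cis (s * X k \<omega>)) \<le> real n" for s
    using norm_sum[of "\<lambda>k. cis (s * X k \<omega>)" "{..<n}"] by simp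
  then have "cmod (ecf X n \<omega> s) \<le> 1" for s
  proof (cases "n = 0")
    case True then show ?thesis by (simp add: ecf_def)
  next
    case False
    have "cmod (ecf X n \<omega> s) = cmod (\<Sum>k<n. cis (s * X k \<omega>)) / real n"
      by (simp add: ecf_def norm_divide)
    also have "\<dots> \<le> real n / real n" by (intro divide_right_mono) (use sb in auto)
    also have "\<dots> = 1" using False by simp
    finally show ?thesis .
  qed
  then show ?thesis unfolding std_ecf_def by (simp add: norm_mult)
qed

definition rr :: "(nat \<Rightarrow> 'a \<Rightarrow> real) \<Rightarrow> nat \<Rightarrow> nat \<Rightarrow> 'a \<Rightarrow> real \<Rightarrow> complex" where
  "rr X m n \<omega> t = D_disc X m n \<omega> t - psi0 t / complex_of_real (sqrt (real n)) * H_dev X m n \<omega> t"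

lemma S_dev:
  assumes k: "k \<ge> 1" and T: "T > 0" and t: "\<bar>t\<bar> \<le> T"
    and dl: "\<And>u. \<bar>u\<bar> \<le> T \<Longrightarrow> cmod (std_ecf X n \<omega> u - psi0 u) \<le> \<delta>"
  shows "cmod (S_trans X k n \<omega> t - psi0 t) \<le> real k * \<delta>"
proof -
  define u where "u = t / sqrt (real k)"
  have u: "\<bar>u\<bar> \<le> T"
  proof -
    have "sqrt (real k) \<ge> 1" using k by simp
    then have "\<bar>t\<bar> / sqrt (real k) \<le> \<bar>t\<bar> / 1" by (intro divide_left_mono) auto
    then have "\<bar>u\<bar> \<le> \<bar>t\<bar>" by (simp add: u_def abs_divide)
    then show ?thesis using t by simp
  qed
  have "S_trans X k n \<omega> t - psi0 t = std_ecf X n \<omega> u ^ k - psi0 u ^ k"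
    using k by (simp add: S_trans_def u_def psi0_pow)
  also have "cmod \<dots> \<le> real k * cmod (std_ecf X n \<omega> u - psi0 u)"
    by (rule norm_power_diff[OF std_ecf_norm psi0_norm_le1])
  also have "\<dots> \<le> real k * \<delta>" using dl[OF u] by (intro mult_left_mono) auto
  finally show ?thesis .
qed

lemma div_sqrt_le: "k \<ge> 1 \<Longrightarrow> \<bar>t\<bar> \<le> T \<Longrightarrow> \<bar>t / sqrt (real k)\<bar> \<le> T"
proof -
  assume k: "k \<ge> 1" and t: "\<bar>t\<bar> \<le> T"
  have "sqrt (real k) \<ge> 1" using k by simp
  then have "\<bar>t\<bar> / sqrt (real k) \<le> \<bar>t\<bar> / 1" by (intro divide_left_mono) auto
  then show ?thesis using t by (simp add: abs_divide)
qed

definition Term :: "(nat \<Rightarrow> 'a \<Rightarrow> real) \<Rightarrow> nat \<Rightarrow> nat \<Rightarrow> 'a \<Rightarrow> real \<Rightarrow> complex" where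
  "Term X k n \<omega> t = S_trans X k n \<omega> t - psi0 t - psi0 t / complex_of_real (sqrt (real n)) *
      (of_nat k * U_proc X n \<omega> (t / sqrt (real k)) / psi0 (t / sqrt (real k)))"

lemma rr_Term: "rr X m n \<omega> t = Term X (m+1) n \<omega> t - Term X m n \<omega> t"
  unfolding rr_def Term_def D_disc_def H_dev_def by (simp add: algebra_simps)

lemma Term_bound:
  assumes k: "k \<ge> 1" and n: "n \<ge> 1" and t: "\<bar>t\<bar> \<le> T"
    and dl: "\<And>u. \<bar>u\<bar> \<le> T \<Longrightarrow> cmod (std_ecf X n \<omega> u - psi0 u) \<le> \<delta>"
  shows "cmod (Term X k n \<omega> t) \<le> real k ^ 2 * (1 + 2 * exp (T\<^sup>2/2))^k * (exp (T\<^sup>2/2) * \<delta>)^2"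
proof -
  define u where "u = t / sqrt (real k)"
  have u: "\<bar>u\<bar> \<le> T" unfolding u_def by (rule div_sqrt_le[OF k t])
  define \<phi> where "\<phi> = std_ecf X n \<omega> u"
  define p where "p = psi0 u"
  define E where "E = exp (T\<^sup>2/2)"
  have p0: "p \<noteq> 0" by (simp add: p_def psi0_nonzero)
  define e where "e = (\<phi> - p) / p"
  have invp: "1 / cmod p \<le> E"
  proof -
    have "exp (-(T\<^sup>2)/2) \<le> cmod p" unfolding p_def by (rule psi0_ge[OF u])
    moreover have "exp (-(T\<^sup>2)/2) > 0" by simp
    moreover have "cmod p > 0" using p0 by simp
    ultimately have "1 / cmod p \<le> 1 / exp (-(T\<^sup>2)/2)" by (intro divide_left_mono) auto
    also have "\<dots> = E" by (simp add: E_def exp_minus field_simps)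
    finally show ?thesis .
  qed
  have E0: "E \<ge> 0" by (simp add: E_def)
  have d1: "cmod (\<phi> - p) \<le> \<delta>" unfolding \<phi>_def p_def by (rule dl[OF u])
  have d2: "cmod (\<phi> - p) \<le> 2"
    using norm_triangle_ineq4[of \<phi> p] std_ecf_norm[of X n \<omega> u] psi0_norm_le1[of u]
    by (simp add: \<phi>_def p_def)
  have ne: "cmod e = cmod (\<phi> - p) * (1 / cmod p)" by (simp add: e_def norm_divide)
  have e1: "cmod e \<le> E * \<delta>"
  proof -
    have "\<delta> \<ge> 0" using d1 norm_ge_zero[of "\<phi> - p"] by linarith
    then have "cmod (\<phi> - p) * (1 / cmod p) \<le> \<delta> * E" using d1 invp E0 by (intro mult_mono) auto
    then show ?thesis unfolding ne by (simp only: mult.commute)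
  qed
  have e2: "cmod e \<le> 2 * E"
    unfolding ne using d2 invp E0 by (intro mult_mono) auto
  have sn: "complex_of_real (sqrt (real n)) \<noteq> 0" using n by simp
  have phi: "\<phi> = p * (1 + e)" using p0 by (simp add: e_def field_simps)
  have pk: "p ^ k = psi0 t" unfolding p_def u_def using k by (simp add: psi0_pow)
  have "Term X k n \<omega> t = psi0 t * ((1+e)^k - 1 - of_nat k * e)"
  proof -
    have "psi0 t / complex_of_real (sqrt (real n)) * (of_nat k * U_proc X n \<omega> u / p) = psi0 t * (of_nat k * e)"
      unfolding U_proc_def e_def \<phi>_def using sn p0 by (simp add: field_simps p_def)
    moreover have "S_trans X k n \<omega> t = psi0 t * (1+e)^k"
      unfolding S_trans_def using phi pk by (simp add: \<phi>_def u_def power_mult_distrib)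
    ultimately show ?thesis unfolding Term_def by (simp add: u_def p_def algebra_simps)
  qed
  then have "cmod (Term X k n \<omega> t) \<le> 1 * (real k ^ 2 * (1 + 2*E)^k * (cmod e)^2)"
    by (simp only: norm_mult) (intro mult_mono psi0_norm_le1 P_bound e2, auto)
  also have "\<dots> \<le> real k ^ 2 * (1 + 2*E)^k * (E * \<delta>)^2"
    using e1 E0 by (simp, intro mult_left_mono power_mono) auto
  finally show ?thesis by (simp add: E_def)
qed

lemma rr_bound:
  assumes m: "m \<ge> 1" and n: "n \<ge> 1" and t: "\<bar>t\<bar> \<le> T"
    and dl: "\<And>u. \<bar>u\<bar> \<le> T \<Longrightarrow> cmod (std_ecf X n \<omega> u - psi0 u) \<le> \<delta>"
  shows "cmod (rr X m n \<omega> t) \<le> 2 * ((real m + 1) ^ 2 * (1 + 2 * exp (T\<^sup>2/2))^(m+1) * exp (T\<^sup>2/2)^2) * \<delta>^2"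
proof -
  define B where "B = 1 + 2 * exp (T\<^sup>2/2)"
  define C where "C = (real m + 1) ^ 2 * B^(m+1) * exp (T\<^sup>2/2)^2"
  have B1: "B \<ge> 1" by (simp add: B_def)
  have a: "cmod (Term X (m+1) n \<omega> t) \<le> C * \<delta>^2"
    using Term_bound[OF _ n t dl, of "m+1"] by (simp add: C_def B_def power_mult_distrib mult_ac add.commute)
  have "cmod (Term X m n \<omega> t) \<le> real m ^ 2 * B^m * (exp (T\<^sup>2/2) * \<delta>)^2"
    using Term_bound[OF m n t dl] by (simp add: B_def)
  also have "\<dots> \<le> C * \<delta>^2"
  proof -
    have "real m ^ 2 \<le> (real m + 1)^2" by (intro power_mono) auto
    moreover have "B^m \<le> B^(m+1)" using B1 by (intro power_increasing) auto
    ultimately have "real m ^ 2 * B^m \<le> (real m + 1)^2 * B^(m+1)"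
      using B1 by (intro mult_mono) auto
    then have "real m ^ 2 * B^m * (exp (T\<^sup>2/2) * \<delta>)^2 \<le> (real m + 1)^2 * B^(m+1) * (exp (T\<^sup>2/2) * \<delta>)^2"
      by (intro mult_right_mono) auto
    also have "\<dots> = C * \<delta>^2" unfolding C_def by (simp add: power_mult_distrib mult_ac)
    finally show ?thesis .
  qed
  finally have b: "cmod (Term X m n \<omega> t) \<le> C * \<delta>^2" .
  have "cmod (rr X m n \<omega> t) \<le> cmod (Term X (m+1) n \<omega> t) + cmod (Term X m n \<omega> t)"
    unfolding rr_Term by (rule norm_triangle_ineq4)
  also have "\<dots> \<le> 2 * C * \<delta>^2" using a b by simp
  finally show ?thesis by (simp add: C_def B_def mult_ac)
qed

lemma D_bound:
  assumes m: "m \<ge> 1" and T: "T > 0" and t: "\<bar>t\<bar> \<le> T"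
    and dl: "\<And>u. \<bar>u\<bar> \<le> T \<Longrightarrow> cmod (std_ecf X n \<omega> u - psi0 u) \<le> \<delta>"
  shows "cmod (D_disc X m n \<omega> t) \<le> (2 * real m + 1) * \<delta>"
proof -
  have a: "cmod (S_trans X (m+1) n \<omega> t - psi0 t) \<le> real (m+1) * \<delta>"
    by (rule S_dev[OF _ T t dl]) simp
  have b: "cmod (S_trans X m n \<omega> t - psi0 t) \<le> real m * \<delta>"
    by (rule S_dev[OF m T t dl])
  have "D_disc X m n \<omega> t = (S_trans X (m+1) n \<omega> t - psi0 t) - (S_trans X m n \<omega> t - psi0 t)"
    by (simp add: D_disc_def)
  then have "cmod (D_disc X m n \<omega> t) \<le> cmod (S_trans X (m+1) n \<omega> t - psi0 t) + cmod (S_trans X m n \<omega> t - psi0 t)"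
    by (simp only:) (rule norm_triangle_ineq4)
  also have "\<dots> \<le> (2 * real m + 1) * \<delta>" using a b by (simp add: algebra_simps)
  finally show ?thesis .
qed

context
  fixes M :: "'a measure" and X :: "nat \<Rightarrow> 'a \<Rightarrow> real" and \<mu> \<sigma> :: real
  assumes PS: "prob_space M" and sig: "\<sigma> > 0"
    and ind: "prob_space.indep_vars M (\<lambda>_. borel) X UNIV"
    and dist: "\<And>i. distributed M lborel (X i) (\<lambda>x. ennreal (normal_density \<mu> \<sigma> x))"
begin

lemma Xmeas[measurable]: "X i \<in> borel_measurable M"
  using dist[of i] unfolding distributed_def by simp

lemma Ydist: "distributed M lborel (\<lambda>\<omega>. (X i \<omega> - \<mu>)/\<sigma>) (\<lambda>x. ennreal (std_normal_density x))"
  using prob_space.normal_standard_normal_convert[OF PS sig] dist[of i] by simp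

lemma Yexp:
  assumes g: "g \<in> borel_measurable borel"
  shows "(\<integral>\<omega>. g ((X i \<omega> - \<mu>)/\<sigma>) \<partial>M) = (\<integral>x. std_normal_density x * g x \<partial>lborel)"
  using distributed_integral[OF Ydist, of g] g by simp

lemma Yint:
  assumes g: "g \<in> borel_measurable borel" and "integrable lborel (\<lambda>x. std_normal_density x * g x)"
  shows "integrable M (\<lambda>\<omega>. g ((X i \<omega> - \<mu>)/\<sigma>))"
  using distributed_integrable[OF Ydist, of g] assms by simp

lemma Ymom_int: "integrable M (\<lambda>\<omega>. ((X i \<omega> - \<mu>)/\<sigma>)^j)"
  by (rule Yint) (auto intro: integrable_std_normal_moment)

lemma Ymom: "(\<integral>\<omega>. ((X i \<omega> - \<mu>)/\<sigma>)^j \<partial>M) = nm j"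
proof -
  have "(\<integral>\<omega>. ((X i \<omega> - \<mu>)/\<sigma>)^j \<partial>M) = (\<integral>x. std_normal_density x * x^j \<partial>lborel)"
    by (rule Yexp) simp
  also have "\<dots> = nm j"
  proof (cases "even j")
    case True
    then obtain k where "j = 2*k" by blast
    then show ?thesis using integral_std_normal_moment_even[of k] by (simp add: nm_even)
  next
    case False
    then obtain k where "j = 2*k+1" using oddE by blast
    then show ?thesis using integral_std_normal_moment_odd[of k] by (simp add: nm_def)
  qed
  finally show ?thesis .
qed

lemma indep_pair:
  fixes f :: "real \<Rightarrow> real"
  assumes f: "f \<in> borel_measurable borel" and kl: "k \<noteq> l"
    and ik: "integrable M (\<lambda>\<omega>. f (X k \<omega>))" and il: "integrable M (\<lambda>\<omega>. f (X l \<omega>))"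
  shows "(\<integral>\<omega>. f (X k \<omega>) * f (X l \<omega>) \<partial>M) = (\<integral>\<omega>. f (X k \<omega>) \<partial>M) * (\<integral>\<omega>. f (X l \<omega>) \<partial>M)"
proof -
  interpret prob_space M by (rule PS)
  have iv: "indep_vars (\<lambda>_. borel) (\<lambda>i \<omega>. f (X i \<omega>)) UNIV"
    by (rule indep_vars_compose2[OF ind]) (use f in simp)
  then have iv2: "indep_vars (\<lambda>_. borel) (\<lambda>i \<omega>. f (X i \<omega>)) {k, l}"
    by (rule indep_vars_subset) simp
  have "(\<integral>\<omega>. (\<Prod>i\<in>{k,l}. f (X i \<omega>)) \<partial>M) = (\<Prod>i\<in>{k,l}. \<integral>\<omega>. f (X i \<omega>) \<partial>M)"
    by (rule indep_vars_lebesgue_integral[OF _ iv2]) (use ik il in auto)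
  then show ?thesis using kl by simp
qed

end

context
  fixes M :: "'a measure" and X :: "nat \<Rightarrow> 'a \<Rightarrow> real" and \<mu> \<sigma> :: real
  assumes PS: "prob_space M" and sig: "\<sigma> > 0"
    and ind: "prob_space.indep_vars M (\<lambda>_. borel) X UNIV"
    and dist: "\<And>i. distributed M lborel (X i) (\<lambda>x. ennreal (normal_density \<mu> \<sigma> x))"
begin

lemma nm_even_pos: "nm (2*j) > 0" by (simp add: nm_even)

lemma Vd_L2:
  assumes n: "n \<ge> 1"
  shows "integrable M (\<lambda>\<omega>. Vd (\<lambda>k. (X k \<omega> - \<mu>)/\<sigma>) n j)"
    and "(\<integral>\<omega>. (Vd (\<lambda>k. (X k \<omega> - \<mu>)/\<sigma>) n j)\<^sup>2 \<partial>M) \<le> nm (2*j) / n"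
    and "integrable M (\<lambda>\<omega>. (Vd (\<lambda>k. (X k \<omega> - \<mu>)/\<sigma>) n j)\<^sup>2)"
proof -
  interpret prob_space M by (rule PS)
  define c where "c = nm j"
  define f where "f x = ((x - \<mu>)/\<sigma>)^j - c" for x
  have fm[measurable]: "f \<in> borel_measurable borel" unfolding f_def by simp
  have fint: "integrable M (\<lambda>\<omega>. f (X k \<omega>))" for k
    unfolding f_def using Ymom_int[OF PS sig ind dist, of k j] by simp
  have fE: "(\<integral>\<omega>. f (X k \<omega>) \<partial>M) = 0" for k
    unfolding f_def using Ymom_int[OF PS sig ind dist, of k j] Ymom[OF PS sig ind dist, of k j]
    by (simp add: c_def prob_space)
  have sq_int: "integrable M (\<lambda>\<omega>. f (X k \<omega>) * f (X k \<omega>))" for k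
  proof -
    have "(\<lambda>\<omega>. f (X k \<omega>) * f (X k \<omega>)) = (\<lambda>\<omega>. ((X k \<omega> - \<mu>)/\<sigma>)^(2*j) - 2*c*((X k \<omega> - \<mu>)/\<sigma>)^j + c*c)"
      by (auto simp: f_def fun_eq_iff power2_eq_square power_mult algebra_simps)
    then show ?thesis using Ymom_int[OF PS sig ind dist, of k "2*j"] Ymom_int[OF PS sig ind dist, of k j] by simp
  qed
  have sqE: "(\<integral>\<omega>. f (X k \<omega>) * f (X k \<omega>) \<partial>M) = nm (2*j) - c\<^sup>2" for k
  proof -
    have "(\<lambda>\<omega>. f (X k \<omega>) * f (X k \<omega>)) = (\<lambda>\<omega>. ((X k \<omega> - \<mu>)/\<sigma>)^(2*j) - 2*c*((X k \<omega> - \<mu>)/\<sigma>)^j + c*c)"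
      by (auto simp: f_def fun_eq_iff power2_eq_square power_mult algebra_simps)
    then show ?thesis
      using Ymom_int[OF PS sig ind dist, of k "2*j"] Ymom_int[OF PS sig ind dist, of k j]
        Ymom[OF PS sig ind dist, of k "2*j"] Ymom[OF PS sig ind dist, of k j]
      by (simp add: prob_space c_def power2_eq_square)
  qed
  have pint: "integrable M (\<lambda>\<omega>. f (X k \<omega>) * f (X l \<omega>))" for k l
  proof (cases "k = l")
    case True then show ?thesis using sq_int by simp
  next
    case False
    have iv: "indep_vars (\<lambda>_. borel) (\<lambda>i \<omega>. f (X i \<omega>)) UNIV"
      by (rule indep_vars_compose2[OF ind]) simp
    then have iv2: "indep_vars (\<lambda>_. borel) (\<lambda>i \<omega>. f (X i \<omega>)) {k, l}"
      by (rule indep_vars_subset) simp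
    have "integrable M (\<lambda>\<omega>. (\<Prod>i\<in>{k,l}. f (X i \<omega>)))"
      by (rule indep_vars_integrable[OF _ iv2]) (use fint in auto)
    then show ?thesis using False by simp
  qed
  have pE: "(\<integral>\<omega>. f (X k \<omega>) * f (X l \<omega>) \<partial>M) = (if k = l then nm (2*j) - c\<^sup>2 else 0)" for k l
  proof (cases "k = l")
    case True then show ?thesis using sqE by simp
  next
    case False
    then show ?thesis using indep_pair[OF PS sig ind dist fm False fint fint] fE by simp
  qed
  have Veq: "Vd (\<lambda>k. (X k \<omega> - \<mu>)/\<sigma>) n j = \<bar>\<Sum>k<n. f (X k \<omega>)\<bar> / n" for \<omega>
  proof -
    have "(\<Sum>k<n. f (X k \<omega>)) = (\<Sum>k<n. ((X k \<omega> - \<mu>)/\<sigma>)^j) - n * c"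
      by (simp add: f_def sum_subtractf)
    then have "(\<Sum>k<n. f (X k \<omega>)) / n = (\<Sum>k<n. ((X k \<omega> - \<mu>)/\<sigma>)^j) / n - c"
      using n by (simp add: diff_divide_distrib)
    then have "Vd (\<lambda>k. (X k \<omega> - \<mu>)/\<sigma>) n j = \<bar>(\<Sum>k<n. f (X k \<omega>)) / n\<bar>"
      by (simp add: Vd_def mh_def c_def)
    then show ?thesis by (simp add: abs_divide)
  qed
  show "integrable M (\<lambda>\<omega>. Vd (\<lambda>k. (X k \<omega> - \<mu>)/\<sigma>) n j)"
    unfolding Veq using fint by auto
  have "(\<lambda>\<omega>. (Vd (\<lambda>k. (X k \<omega> - \<mu>)/\<sigma>) n j)\<^sup>2) = (\<lambda>\<omega>. (\<Sum>k<n. \<Sum>l<n. f (X k \<omega>) * f (X l \<omega>)) / (real n)\<^sup>2)"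
    unfolding Veq by (auto simp: fun_eq_iff power_divide power2_eq_square sum_product)
  then show "integrable M (\<lambda>\<omega>. (Vd (\<lambda>k. (X k \<omega> - \<mu>)/\<sigma>) n j)\<^sup>2)"
    using pint by simp
  from \<open>(\<lambda>\<omega>. _) = _\<close> have "(\<integral>\<omega>. (Vd (\<lambda>k. (X k \<omega> - \<mu>)/\<sigma>) n j)\<^sup>2 \<partial>M) = (\<Sum>k<n. \<Sum>l<n. (\<integral>\<omega>. f (X k \<omega>) * f (X l \<omega>) \<partial>M)) / (real n)\<^sup>2"
    using pint by (simp add: integral_sum)
  also have "\<dots> = (\<Sum>k<n. nm (2*j) - c\<^sup>2) / (real n)\<^sup>2"
    unfolding pE by (simp add: sum.delta)
  also have "\<dots> = (nm (2*j) - c\<^sup>2) / n" using n by (simp add: power2_eq_square)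
  also have "\<dots> \<le> nm (2*j) / n" by (intro divide_right_mono) auto
  finally show "(\<integral>\<omega>. (Vd (\<lambda>k. (X k \<omega> - \<mu>)/\<sigma>) n j)\<^sup>2 \<partial>M) \<le> nm (2*j) / n" .
qed

lemma Vd_L1:
  assumes n: "n \<ge> 1"
  shows "(\<integral>\<omega>. Vd (\<lambda>k. (X k \<omega> - \<mu>)/\<sigma>) n j \<partial>M) \<le> sqrt (nm (2*j)) / sqrt n"
proof -
  interpret prob_space M by (rule PS)
  define V where "V \<omega> = Vd (\<lambda>k. (X k \<omega> - \<mu>)/\<sigma>) n j" for \<omega>
  define w where "w = sqrt (nm (2*j) / n)"
  have w0: "w > 0" using n nm_even_pos[of j] by (simp add: w_def)
  have w2: "w\<^sup>2 = nm (2*j) / n" using n nm_even_pos[of j] by (simp add: w_def)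
  have Vi: "integrable M V" unfolding V_def by (rule Vd_L2(1)[OF n])
  have V2: "(\<integral>\<omega>. (V \<omega>)\<^sup>2 \<partial>M) \<le> w\<^sup>2" unfolding V_def w2 by (rule Vd_L2(2)[OF n])
  have V2i: "integrable M (\<lambda>\<omega>. (V \<omega>)\<^sup>2)"
    unfolding V_def by (rule Vd_L2(3)[OF n])
  have pt: "V \<omega> \<le> ((V \<omega>)\<^sup>2 / w + w) / 2" for \<omega>
  proof -
    have "0 \<le> (V \<omega> - w)\<^sup>2" by simp
    then have "2 * w * V \<omega> \<le> (V \<omega>)\<^sup>2 + w\<^sup>2" by (simp add: power2_eq_square algebra_simps)
    then show ?thesis using w0 by (simp add: field_simps power2_eq_square)
  qed
  have "(\<integral>\<omega>. V \<omega> \<partial>M) \<le> (\<integral>\<omega>. ((V \<omega>)\<^sup>2 / w + w) / 2 \<partial>M)"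
    by (intro integral_mono Vi pt) (use V2i in auto)
  also have "\<dots> = ((\<integral>\<omega>. (V \<omega>)\<^sup>2 \<partial>M) / w + w) / 2"
    using V2i by (simp add: prob_space)
  also have "\<dots> \<le> (w\<^sup>2 / w + w) / 2" using V2 w0 by (intro divide_right_mono add_right_mono) auto
  also have "\<dots> = w" using w0 by (simp add: power2_eq_square)
  also have "w = sqrt (nm (2*j)) / sqrt n" by (simp add: w_def real_sqrt_divide)
  finally show ?thesis unfolding V_def .
qed

end

lemma summable_g:
  assumes a: "a \<ge> 0"
  shows "summable (\<lambda>j. a^j / fact j * sqrt (nm (2*j)))"
proof (rule summable_ratio_test[where c="1/2" and N="nat \<lceil>8*a\<^sup>2\<rceil>"])
  fix j assume j: "j \<ge> nat \<lceil>8*a\<^sup>2\<rceil>"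
  then have j8: "real j \<ge> 8*a\<^sup>2" by linarith
  have key: "a * sqrt (2 * real j + 1) \<le> (real j + 1) / 2"
  proof (rule power2_le_imp_le)
    have "(a * sqrt (2 * real j + 1))\<^sup>2 = a\<^sup>2 * (2 * real j + 1)" by (simp add: power_mult_distrib)
    also have "\<dots> \<le> ((real j + 1) / 2)\<^sup>2"
    proof -
      have "4 * (a\<^sup>2 * (2 * real j + 1)) \<le> 8*a\<^sup>2 * (real j + 1)" by (simp add: algebra_simps)
      also have "\<dots> \<le> (real j + 1) * (real j + 1)" using j8 by (intro mult_right_mono) auto
      finally show ?thesis by (simp add: power2_eq_square field_simps)
    qed
    finally show "(a * sqrt (2 * real j + 1))\<^sup>2 \<le> ((real j + 1) / 2)\<^sup>2" .
  qed simp
  have "a^Suc j / fact (Suc j) * sqrt (nm (2 * Suc j)) =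
        (a * sqrt (2 * real j + 1) / (real j + 1)) * (a^j / fact j * sqrt (nm (2*j)))"
  proof -
    have e: "sqrt (nm (2 * Suc j)) = sqrt (2 * real j + 1) * sqrt (nm (2*j))"
      by (simp only: nm_2Suc real_sqrt_mult)
    show ?thesis unfolding e by (simp add: field_simps)
  qed
  also have "\<dots> \<le> (1/2) * (a^j / fact j * sqrt (nm (2*j)))"
  proof (rule mult_right_mono)
    show "a * sqrt (2 * real j + 1) / (real j + 1) \<le> 1/2" using key by (simp add: divide_simps)
  qed (use a nm_nonneg in simp)
  finally show "norm (a^Suc j / fact (Suc j) * sqrt (nm (2 * Suc j))) \<le> 1/2 * norm (a^j / fact j * sqrt (nm (2*j)))"
    using a nm_nonneg by simp
qed simp

context
  fixes M :: "'a measure" and X :: "nat \<Rightarrow> 'a \<Rightarrow> real" and \<mu> \<sigma> :: real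
  assumes PS: "prob_space M" and sig: "\<sigma> > 0"
    and ind: "prob_space.indep_vars M (\<lambda>_. borel) X UNIV"
    and dist: "\<And>i. distributed M lborel (X i) (\<lambda>x. ennreal (normal_density \<mu> \<sigma> x))"
begin

lemma W_int:
  assumes n: "n \<ge> 1" and a: "a \<ge> 0"
  shows "integrable M (\<lambda>\<omega>. Wd a (\<lambda>k. (X k \<omega> - \<mu>)/\<sigma>) n)"
    and "(\<integral>\<omega>. Wd a (\<lambda>k. (X k \<omega> - \<mu>)/\<sigma>) n \<partial>M) \<le> (\<Sum>j. a^j / fact j * sqrt (nm (2*j))) / sqrt n"
proof -
  define F where "F j \<omega> = a^j / fact j * Vd (\<lambda>k. (X k \<omega> - \<mu>)/\<sigma>) n j" for j \<omega>
  define g where "g j = a^j / fact j * sqrt (nm (2*j))" for j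
  have Fi: "integrable M (F j)" for j
    unfolding F_def using Vd_L2(1)[OF PS sig ind dist n, of j] by simp
  have Fn: "norm (F j \<omega>) = F j \<omega>" for j \<omega> using a by (simp add: F_def Vd_def)
  have FE: "(\<integral>\<omega>. F j \<omega> \<partial>M) \<le> g j / sqrt n" for j
  proof -
    have "(\<integral>\<omega>. F j \<omega> \<partial>M) = a^j / fact j * (\<integral>\<omega>. Vd (\<lambda>k. (X k \<omega> - \<mu>)/\<sigma>) n j \<partial>M)"
      by (simp add: F_def)
    also have "\<dots> \<le> a^j / fact j * (sqrt (nm (2*j)) / sqrt n)"
      using Vd_L1[OF PS sig ind dist n, of j] a by (intro mult_left_mono) auto
    finally show ?thesis by (simp add: g_def)
  qed
  have FE0: "(\<integral>\<omega>. F j \<omega> \<partial>M) \<ge> 0" for j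
    by (intro integral_nonneg_AE) (use a in \<open>auto simp: F_def Vd_def\<close>)
  have gs: "summable (\<lambda>j. g j / sqrt n)" unfolding g_def
    by (intro summable_divide summable_g a)
  have sI: "summable (\<lambda>j. \<integral>\<omega>. norm (F j \<omega>) \<partial>M)"
    unfolding Fn by (rule summable_comparison_test[OF _ gs]) (use FE FE0 in auto)
  have sA: "AE \<omega> in M. summable (\<lambda>j. norm (F j \<omega>))"
    by (intro AE_I2) (simp only: Fn, unfold F_def, rule summable_Vd[OF a])
  have Wd_eq: "Wd a (\<lambda>k. (X k \<omega> - \<mu>)/\<sigma>) n = (\<Sum>j. F j \<omega>)" for \<omega>
    by (simp add: Wd_def F_def)
  show "integrable M (\<lambda>\<omega>. Wd a (\<lambda>k. (X k \<omega> - \<mu>)/\<sigma>) n)"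
    unfolding Wd_eq by (rule integrable_suminf[OF Fi sA sI])
  have "(\<integral>\<omega>. Wd a (\<lambda>k. (X k \<omega> - \<mu>)/\<sigma>) n \<partial>M) = (\<Sum>j. \<integral>\<omega>. F j \<omega> \<partial>M)"
    unfolding Wd_eq by (rule integral_suminf[OF Fi sA sI])
  also have "\<dots> \<le> (\<Sum>j. g j / sqrt n)"
    by (intro suminf_le FE gs summable_integral[OF Fi sA sI])
  also have "\<dots> = (\<Sum>j. g j) / sqrt n"
    by (rule suminf_divide) (unfold g_def, rule summable_g[OF a])
  finally show "(\<integral>\<omega>. Wd a (\<lambda>k. (X k \<omega> - \<mu>)/\<sigma>) n \<partial>M) \<le> (\<Sum>j. a^j / fact j * sqrt (nm (2*j))) / sqrt n"
    by (simp add: g_def)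
qed

lemma W_markov:
  assumes n: "n \<ge> 1" and a: "a \<ge> 0" and c: "c > 0"
  shows "measure M {\<omega>\<in>space M. Wd a (\<lambda>k. (X k \<omega> - \<mu>)/\<sigma>) n \<ge> c}
           \<le> (\<Sum>j. a^j / fact j * sqrt (nm (2*j))) / sqrt n / c"
proof -
  have "measure M {\<omega>\<in>space M. Wd a (\<lambda>k. (X k \<omega> - \<mu>)/\<sigma>) n \<ge> c}
      \<le> (\<integral>\<omega>. Wd a (\<lambda>k. (X k \<omega> - \<mu>)/\<sigma>) n \<partial>M) / c"
    by (rule integral_Markov_inequality_measure[OF W_int(1)[OF n a] _ _ c])
       (auto intro: Wd_nonneg a)
  also have "\<dots> \<le> (\<Sum>j. a^j / fact j * sqrt (nm (2*j))) / sqrt n / c"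
    using W_int(2)[OF n a] c by (intro divide_right_mono) auto
  finally show ?thesis .
qed

end

lemma sup_norm_eq_rat:
  fixes g :: "real \<Rightarrow> real"
  assumes T: "T > 0" and cont: "continuous_on {-T..T} g"
  shows "(SUP t\<in>{-T..T}. g t) = (SUP t\<in>{-T..T} \<inter> \<rat>. g t)"
    and "bdd_above (g ` {-T..T})"
proof -
  have cpt: "compact (g ` {-T..T})" by (rule compact_continuous_image[OF cont]) simp
  show bdd: "bdd_above (g ` {-T..T})" by (rule bounded_imp_bdd_above[OF compact_imp_bounded[OF cpt]])
  have "0 \<in> {-T..T} \<inter> \<rat>" using T by simp
  then have ne: "{-T..T} \<inter> \<rat> \<noteq> {}" by blast
  have bddQ: "bdd_above (g ` ({-T..T} \<inter> \<rat>))" by (rule bdd_above_mono[OF bdd]) auto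
  show "(SUP t\<in>{-T..T}. g t) = (SUP t\<in>{-T..T} \<inter> \<rat>. g t)"
  proof (rule antisym)
    show "(SUP t\<in>{-T..T} \<inter> \<rat>. g t) \<le> (SUP t\<in>{-T..T}. g t)"
      by (rule cSUP_subset_mono[OF ne bdd]) auto
    show "(SUP t\<in>{-T..T}. g t) \<le> (SUP t\<in>{-T..T} \<inter> \<rat>. g t)"
    proof (rule cSUP_least)
      show "{-T..T} \<noteq> {}" using T by simp
      fix t assume t: "t \<in> {-T..T}"
      show "g t \<le> (SUP t\<in>{-T..T} \<inter> \<rat>. g t)"
      proof (rule field_le_epsilon)
        fix e :: real assume e: "e > 0"
        obtain d where d: "d > 0" "\<And>s. s \<in> {-T..T} \<Longrightarrow> dist s t < d \<Longrightarrow> dist (g s) (g t) < e"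
          using cont t e unfolding continuous_on_iff by metis
        obtain q where q: "q \<in> \<rat>" "q \<in> {-T..T}" "\<bar>q - t\<bar> < d"
        proof (cases "t \<le> 0")
          case True
          have "t < min (t + d) T" using d T True by simp
          then obtain q where "q \<in> \<rat>" "t < q" "q < min (t + d) T" using Rats_dense_in_real by blast
          then show ?thesis using t that[of q] by auto
        next
          case False
          have "max (t - d) (-T) < t" using d T False by simp
          then obtain q where "q \<in> \<rat>" "max (t - d) (-T) < q" "q < t" using Rats_dense_in_real by blast
          then show ?thesis using t that[of q] by auto
        qed
        have "g t < g q + e" using d(2)[OF q(2)] q(3) by (simp add: dist_real_def abs_less_iff)
        also have "g q \<le> (SUP t\<in>{-T..T} \<inter> \<rat>. g t)" by (rule cSUP_upper[OF _ bddQ]) (use q in auto)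
        finally show "g t \<le> (SUP t\<in>{-T..T} \<inter> \<rat>. g t) + e" by simp
      qed
    qed
  qed
qed

lemma sup_norm_meas:
  fixes f :: "'a \<Rightarrow> real \<Rightarrow> complex"
  assumes T: "T > 0" and cont: "\<And>\<omega>. continuous_on {-T..T} (f \<omega>)"
    and meas: "\<And>t. (\<lambda>\<omega>. f \<omega> t) \<in> borel_measurable M"
  shows "(\<lambda>\<omega>. sup_norm_on T (f \<omega>)) \<in> borel_measurable M"
proof -
  have c: "continuous_on {-T..T} (\<lambda>t. norm (f \<omega> t))" for \<omega>
    by (intro continuous_on_norm cont)
  have eq: "sup_norm_on T (f \<omega>) = (SUP t\<in>{-T..T} \<inter> \<rat>. norm (f \<omega> t))" for \<omega>
    unfolding sup_norm_on_def by (rule sup_norm_eq_rat(1)[OF T c])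
  have "(\<lambda>\<omega>. SUP t\<in>{-T..T} \<inter> \<rat>. norm (f \<omega> t)) \<in> borel_measurable M"
  proof (rule borel_measurable_cSUP)
    show "countable ({-T..T} \<inter> \<rat>)" by (rule countable_subset[OF _ countable_rat]) auto
    show "(\<lambda>\<omega>. norm (f \<omega> t)) \<in> borel_measurable M" for t using meas[of t] by measurable
    show "bdd_above ((\<lambda>t. norm (f \<omega> t)) ` ({-T..T} \<inter> \<rat>))" for \<omega>
      by (rule bdd_above_mono[OF sup_norm_eq_rat(2)[OF T c]]) auto
  qed
  then show ?thesis unfolding eq .
qed

lemma sup_norm_le:
  assumes T: "T \<ge> 0" and b: "\<And>t. t \<in> {-T..T} \<Longrightarrow> norm (f t) \<le> B"
  shows "sup_norm_on T f \<le> B"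
  unfolding sup_norm_on_def by (rule cSUP_least) (use T b in auto)

lemma sup_norm_nonneg:
  assumes T: "T \<ge> 0" and bdd: "bdd_above ((\<lambda>t. norm (f t)) ` {-T..T})"
  shows "sup_norm_on T f \<ge> 0"
proof -
  have "norm (f 0) \<le> sup_norm_on T f" unfolding sup_norm_on_def
    by (rule cSUP_upper[OF _ bdd]) (use T in auto)
  then show ?thesis using norm_ge_zero order_trans by blast
qed

lemma cont_std_ecf: "continuous_on A (std_ecf X n \<omega>)"
  unfolding std_ecf_def ecf_def cis_conv_exp divide_inverse by (intro continuous_intros)

lemma cont_D: "continuous_on A (D_disc X m n \<omega>)"
proof -
  have "continuous_on A (\<lambda>t. std_ecf X n \<omega> (t * inverse (sqrt (real k))))" for k
    by (rule continuous_on_compose2[OF cont_std_ecf[of UNIV]]) (auto intro!: continuous_intros)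
  then show ?thesis unfolding D_disc_def S_trans_def divide_inverse
    by (intro continuous_intros)
qed

lemma cis_meas[measurable]: "cis \<in> borel_measurable borel"
  by (intro borel_measurable_continuous_onI continuous_intros)

lemma meas_std_ecf[measurable]:
  assumes [measurable]: "\<And>k. X k \<in> borel_measurable M"
  shows "(\<lambda>\<omega>. std_ecf X n \<omega> t) \<in> borel_measurable M"
  unfolding std_ecf_def ecf_def sample_mean_def sample_sd_def by measurable

lemma meas_D[measurable]:
  assumes [measurable]: "\<And>k. X k \<in> borel_measurable M"
  shows "(\<lambda>\<omega>. D_disc X m n \<omega> t) \<in> borel_measurable M"
  unfolding D_disc_def S_trans_def by measurable

lemma meas_rr[measurable]:
  assumes [measurable]: "\<And>k. X k \<in> borel_measurable M"
  shows "(\<lambda>\<omega>. rr X m n \<omega> t) \<in> borel_measurable M"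
  unfolding rr_def H_dev_def U_proc_def by measurable

lemma cont_psi0: "continuous_on A psi0"
  unfolding psi0_def by (intro continuous_intros) auto

lemma cont_div_const: "continuous_on A (\<lambda>t::real. t / c)"
  unfolding divide_inverse by (intro continuous_intros)

lemma cont_rr: "continuous_on A (rr X m n \<omega>)"
proof -
  have cU: "continuous_on UNIV (U_proc X n \<omega>)"
    unfolding U_proc_def by (intro continuous_on_mult continuous_on_const continuous_on_diff cont_std_ecf cont_psi0)
  have c1: "continuous_on A (\<lambda>t. U_proc X n \<omega> (t / sqrt (real k)))" for k
    by (rule continuous_on_compose2[OF cU cont_div_const]) auto
  have c2: "continuous_on A (\<lambda>t. psi0 (t / sqrt (real k)))" for k
    by (rule continuous_on_compose2[OF cont_psi0[of UNIV] cont_div_const]) auto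
  have cH: "continuous_on A (H_dev X m n \<omega>)"
    unfolding H_dev_def
    by (intro continuous_on_diff continuous_on_divide continuous_on_mult continuous_on_const c1 c2)
       (auto simp: psi0_nonzero)
  have cP: "continuous_on A (\<lambda>t. psi0 t / c)" for c :: complex
    unfolding divide_inverse by (intro continuous_on_mult continuous_on_const cont_psi0)
  show ?thesis unfolding rr_def
    by (intro continuous_on_diff continuous_on_mult cont_D cP cH)
qed

lemma ev_sqrt: "eventually (\<lambda>n. sqrt (real n) > L) sequentially"
proof (rule eventually_sequentiallyI[of "nat \<lceil>L\<^sup>2\<rceil> + 1"])
  fix n assume "nat \<lceil>L\<^sup>2\<rceil> + 1 \<le> n"
  then have "real n > L\<^sup>2" by linarith
  then have "sqrt (real n) > sqrt (L\<^sup>2)" by (intro real_sqrt_less_mono)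
  then show "sqrt (real n) > L" by simp
qed

lemma Delta_le2: "cmod (std_ecf X n \<omega> u - psi0 u) \<le> 2"
  using norm_triangle_ineq4[of "std_ecf X n \<omega> u" "psi0 u"] std_ecf_norm[of X n \<omega> u] psi0_norm_le1[of u]
  by simp

lemma sup_norm_D_nonneg: "T > 0 \<Longrightarrow> sup_norm_on T (D_disc X m n \<omega>) \<ge> 0"
  by (rule sup_norm_nonneg, simp, rule sup_norm_eq_rat(2), assumption, intro continuous_on_norm cont_D)

lemma sup_norm_rr_nonneg: "T > 0 \<Longrightarrow> sup_norm_on T (rr X m n \<omega>) \<ge> 0"
  by (rule sup_norm_nonneg, simp, rule sup_norm_eq_rat(2), assumption, intro continuous_on_norm cont_rr)

definition Kr :: "nat \<Rightarrow> real \<Rightarrow> real" where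
  "Kr m T = 2 * ((real m + 1) ^ 2 * (1 + 2 * exp (T\<^sup>2/2))^(m+1) * exp (T\<^sup>2/2)^2)"

lemma Kr_pos: "Kr m T > 0"
proof -
  have "(1 + 2 * exp (T\<^sup>2/2))^(m+1) > 0" by (intro zero_less_power) (simp add: add_pos_pos)
  then show ?thesis unfolding Kr_def by (intro mult_pos_pos) auto
qed

lemma good_bounds:
  fixes X :: "nat \<Rightarrow> 'a \<Rightarrow> real"
  assumes \<sigma>: "\<sigma> > 0" and n: "n \<ge> 1" and T: "T > 0" and m: "m \<ge> 1"
    and W: "Wd (2*T) (\<lambda>k. (X k \<omega> - \<mu>)/\<sigma>) n \<le> min (T/2) (T\<^sup>2/2)"
  shows "sup_norm_on T (D_disc X m n \<omega>) \<le> (2 * real m + 1) * ((3 + 1/T) * Wd (2*T) (\<lambda>k. (X k \<omega> - \<mu>)/\<sigma>) n)"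
    and "sup_norm_on T (rr X m n \<omega>) \<le> Kr m T * ((3 + 1/T) * Wd (2*T) (\<lambda>k. (X k \<omega> - \<mu>)/\<sigma>) n)^2"
proof -
  have dl: "\<And>u. \<bar>u\<bar> \<le> T \<Longrightarrow> cmod (std_ecf X n \<omega> u - psi0 u) \<le> (3 + 1/T) * Wd (2*T) (\<lambda>k. (X k \<omega> - \<mu>)/\<sigma>) n"
    by (rule std_ecf_bound[where X=X and \<omega>=\<omega> and \<mu>=\<mu>, OF \<sigma> n T W])
  show "sup_norm_on T (D_disc X m n \<omega>) \<le> (2 * real m + 1) * ((3 + 1/T) * Wd (2*T) (\<lambda>k. (X k \<omega> - \<mu>)/\<sigma>) n)"
    by (rule sup_norm_le) (use T in \<open>auto intro!: D_bound[OF m T _ dl]\<close>)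
  show "sup_norm_on T (rr X m n \<omega>) \<le> Kr m T * ((3 + 1/T) * Wd (2*T) (\<lambda>k. (X k \<omega> - \<mu>)/\<sigma>) n)^2"
  proof (rule sup_norm_le)
    fix t assume "t \<in> {-T..T}"
    then have "\<bar>t\<bar> \<le> T" by auto
    from rr_bound[OF m n this dl]
    show "cmod (rr X m n \<omega> t) \<le> Kr m T * ((3 + 1/T) * Wd (2*T) (\<lambda>k. (X k \<omega> - \<mu>)/\<sigma>) n)^2"
      unfolding Kr_def .
  qed (use T in simp)
qed

lemma rr_always:
  assumes n: "n \<ge> 1" and T: "T > 0" and m: "m \<ge> 1"
  shows "sup_norm_on T (rr X m n \<omega>) \<le> Kr m T * 2^2"
proof (rule sup_norm_le)
  fix t assume "t \<in> {-T..T}"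
  then have "\<bar>t\<bar> \<le> T" by auto
  from rr_bound[OF m n this Delta_le2] show "cmod (rr X m n \<omega> t) \<le> Kr m T * 2^2" unfolding Kr_def .
qed (use T in simp)

lemma arith_r:
  fixes s K0 W x C \<eta> :: real
  assumes s: "s > 0" and W0: "0 \<le> W" and WK: "W < K0/s" and x: "x \<le> C * W\<^sup>2" and C: "C \<ge> 0"
    and sb: "s > C * K0\<^sup>2 / \<eta>" and \<eta>: "\<eta> > 0"
  shows "s * x \<le> \<eta>"
proof -
  have "W\<^sup>2 \<le> (K0/s)\<^sup>2" using W0 WK by (intro power_mono) auto
  then have "s * x \<le> s * (C * (K0/s)\<^sup>2)" using x s C by (intro mult_left_mono order_trans[OF x] mult_left_mono) auto
  also have "\<dots> = C * K0\<^sup>2 / s" using s by (simp add: power2_eq_square field_simps)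
  also have "\<dots> \<le> \<eta>" using sb s \<eta> by (simp add: divide_simps mult.commute)
  finally show ?thesis .
qed

lemma arith_d:
  fixes s K0 W x C :: real
  assumes s: "s > 0" and W0: "0 \<le> W" and WK: "W < K0/s" and x: "x \<le> C * W" and C: "C \<ge> 0"
  shows "s * x \<le> C * K0"
proof -
  have "s * x \<le> s * (C * W)" using x s by (intro mult_left_mono) auto
  also have "\<dots> \<le> s * (C * (K0/s))" using WK s C by (intro mult_left_mono) auto
  also have "\<dots> = C * K0" using s by simp
  finally show ?thesis .
qed

theorem lemma1:
  fixes M :: "'a measure" and X :: "nat \<Rightarrow> 'a \<Rightarrow> real"
    and \<mu> \<sigma> T :: real and Mmax :: nat
  assumes "prob_space M"
    and "\<sigma> > 0"
    and "prob_space.indep_vars M (\<lambda>_. borel) X UNIV"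
    and "\<And>i. distributed M lborel (X i) (\<lambda>x. ennreal (normal_density \<mu> \<sigma> x))"
    and "T > 0"
  shows "\<forall>m\<in>{1..Mmax}. \<exists>r :: nat \<Rightarrow> 'a \<Rightarrow> real \<Rightarrow> complex.
           (\<forall>n \<omega>. continuous_on {-T..T} (r n \<omega>))
         \<and> (\<forall>n\<ge>1. \<forall>\<omega>\<in>space M. \<forall>t\<in>{-T..T}.
              D_disc X m n \<omega> t = psi0 t / complex_of_real (sqrt (real n)) * H_dev X m n \<omega> t + r n \<omega> t)
         \<and> (\<forall>n. (\<lambda>\<omega>. sup_norm_on T (r n \<omega>)) \<in> borel_measurable M)
         \<and> small_oP M (\<lambda>n \<omega>. sup_norm_on T (r n \<omega>)) (\<lambda>n. 1 / sqrt (real n))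
         \<and> (\<forall>p::real. p \<ge> 1 \<longrightarrow>
              unif_integrable M (\<lambda>n \<omega>. sup_norm_on T (r n \<omega>) powr p) {1..})
         \<and> (\<forall>n. (\<lambda>\<omega>. sup_norm_on T (D_disc X m n \<omega>)) \<in> borel_measurable M)
         \<and> big_OP M (\<lambda>n \<omega>. sup_norm_on T (D_disc X m n \<omega>)) (\<lambda>n. 1 / sqrt (real n))"
proof (intro ballI)
  fix m assume "m \<in> {1..Mmax}"
  then have m: "m \<ge> 1" by simp
  note PS = assms(1) and sig = assms(2) and ind = assms(3) and dist = assms(4) and T = assms(5)
  interpret P: prob_space M by (rule PS)
  have Xm[measurable]: "X k \<in> borel_measurable M" for k using Xmeas[OF PS sig ind dist] .
  define W where "W n \<omega> = Wd (2*T) (\<lambda>k. (X k \<omega> - \<mu>)/\<sigma>) n" for n \<omega>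
  define G where "G = (\<Sum>j. (2*T)^j / fact j * sqrt (nm (2*j)))"
  define \<delta>0 where "\<delta>0 = min (T/2) (T\<^sup>2/2)"
  have \<delta>0: "\<delta>0 > 0" using T by (simp add: \<delta>0_def)
  have T2: "2*T \<ge> 0" using T by simp
  have G0: "G \<ge> 0" unfolding G_def
    by (rule suminf_nonneg[OF summable_g[OF T2]])
       (intro mult_nonneg_nonneg divide_nonneg_nonneg zero_le_power real_sqrt_ge_zero nm_nonneg, use T in auto)
  have W0: "W n \<omega> \<ge> 0" for n \<omega> unfolding W_def by (rule Wd_nonneg[OF T2])
  have Wmeas[measurable]: "W n \<in> borel_measurable M" if "n \<ge> 1" for n
    unfolding W_def by (rule borel_measurable_integrable[OF W_int(1)[OF PS sig ind dist that T2]])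
  have meas_bound: "measure M A \<le> G / K0"
    if n: "n \<ge> 1" and K0: "K0 > 0" and A: "A \<subseteq> {\<omega>\<in>space M. K0 / sqrt n \<le> W n \<omega>}" for n K0 A
  proof -
    have sn: "sqrt (real n) > 0" using n by simp
    have "measure M A \<le> measure M {\<omega>\<in>space M. K0 / sqrt n \<le> W n \<omega>}"
      by (rule P.finite_measure_mono[OF A]) (use n in measurable)
    also have "\<dots> \<le> G / sqrt n / (K0 / sqrt n)"
      unfolding W_def G_def by (rule W_markov[OF PS sig ind dist n T2]) (use K0 sn in simp)
    also have "\<dots> = G / K0" using sn by simp
    finally show ?thesis .
  qed
  have choose: "\<exists>K0>0. G / K0 < \<epsilon>" if "\<epsilon> > 0" for \<epsilon>
  proof (intro exI conjI)
    show "2 * G / \<epsilon> + 1 > 0" using G0 that by (simp add: add_nonneg_pos)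
    have "G < \<epsilon> * (2 * G / \<epsilon> + 1)" using G0 that by (simp add: algebra_simps)
    then show "G / (2 * G / \<epsilon> + 1) < \<epsilon>" using G0 that
      by (subst divide_less_eq) (auto simp: add_nonneg_pos mult.commute)
  qed
  have Dmeas: "(\<lambda>\<omega>. sup_norm_on T (D_disc X m n \<omega>)) \<in> borel_measurable M" for n
    by (rule sup_norm_meas[OF T cont_D meas_D]) simp
  have rmeas[measurable]: "(\<lambda>\<omega>. sup_norm_on T (rr X m n \<omega>)) \<in> borel_measurable M" for n
    by (rule sup_norm_meas[OF T cont_rr meas_rr]) simp
  show "\<exists>r :: nat \<Rightarrow> 'a \<Rightarrow> real \<Rightarrow> complex.
           (\<forall>n \<omega>. continuous_on {-T..T} (r n \<omega>))
         \<and> (\<forall>n\<ge>1. \<forall>\<omega>\<in>space M. \<forall>t\<in>{-T..T}.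
              D_disc X m n \<omega> t = psi0 t / complex_of_real (sqrt (real n)) * H_dev X m n \<omega> t + r n \<omega> t)
         \<and> (\<forall>n. (\<lambda>\<omega>. sup_norm_on T (r n \<omega>)) \<in> borel_measurable M)
         \<and> small_oP M (\<lambda>n \<omega>. sup_norm_on T (r n \<omega>)) (\<lambda>n. 1 / sqrt (real n))
         \<and> (\<forall>p::real. p \<ge> 1 \<longrightarrow>
              unif_integrable M (\<lambda>n \<omega>. sup_norm_on T (r n \<omega>) powr p) {1..})
         \<and> (\<forall>n. (\<lambda>\<omega>. sup_norm_on T (D_disc X m n \<omega>)) \<in> borel_measurable M)
         \<and> big_OP M (\<lambda>n \<omega>. sup_norm_on T (D_disc X m n \<omega>)) (\<lambda>n. 1 / sqrt (real n))"
  proof (rule exI[of _ "rr X m"], intro conjI)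
    show "\<forall>n \<omega>. continuous_on {-T..T} (rr X m n \<omega>)" by (intro allI cont_rr)
    show "\<forall>n\<ge>1. \<forall>\<omega>\<in>space M. \<forall>t\<in>{-T..T}.
              D_disc X m n \<omega> t = psi0 t / complex_of_real (sqrt (real n)) * H_dev X m n \<omega> t + rr X m n \<omega> t"
      by (simp add: rr_def)
    show "\<forall>n. (\<lambda>\<omega>. sup_norm_on T (rr X m n \<omega>)) \<in> borel_measurable M" using rmeas by blast
    show "\<forall>n. (\<lambda>\<omega>. sup_norm_on T (D_disc X m n \<omega>)) \<in> borel_measurable M" using Dmeas by blast
    show "small_oP M (\<lambda>n \<omega>. sup_norm_on T (rr X m n \<omega>)) (\<lambda>n. 1 / sqrt (real n))"
      unfolding small_oP_def
    proof (intro allI impI)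
      fix \<eta> :: real assume \<eta>: "\<eta> > 0"
      show "((\<lambda>n. measure M {\<omega>\<in>space M. \<bar>sup_norm_on T (rr X m n \<omega>) / (1 / sqrt (real n))\<bar> > \<eta>}) \<longlongrightarrow> 0) sequentially"
        unfolding tendsto_iff
      proof (intro allI impI)
        fix \<epsilon> :: real assume \<epsilon>: "\<epsilon> > 0"
        obtain K0 where K0: "K0 > 0" "G / K0 < \<epsilon>" using choose[OF \<epsilon>] by blast
        define Cr where "Cr = Kr m T * (3 + 1/T)\<^sup>2"
        have Cr: "Cr \<ge> 0" using Kr_pos[of m T] by (simp add: Cr_def)
        have ev: "eventually (\<lambda>n. n \<ge> 1 \<and> sqrt (real n) > K0 / \<delta>0 \<and> sqrt (real n) > Cr * K0\<^sup>2 / \<eta>) sequentially"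
          by (intro eventually_conj ev_sqrt) (simp add: eventually_ge_at_top)
        show "eventually (\<lambda>n. dist (measure M {\<omega>\<in>space M. \<bar>sup_norm_on T (rr X m n \<omega>) / (1 / sqrt (real n))\<bar> > \<eta>}) 0 < \<epsilon>) sequentially"
        proof (rule eventually_mono[OF ev])
          fix n assume nn: "n \<ge> 1 \<and> sqrt (real n) > K0 / \<delta>0 \<and> sqrt (real n) > Cr * K0\<^sup>2 / \<eta>"
          then have n: "n \<ge> 1" and s1: "sqrt (real n) > K0 / \<delta>0" and s2: "sqrt (real n) > Cr * K0\<^sup>2 / \<eta>" by auto
          define s where "s = sqrt (real n)"
          have s: "s > 0" using n by (simp add: s_def)
          have sub: "{\<omega>\<in>space M. \<bar>sup_norm_on T (rr X m n \<omega>) / (1 / sqrt (real n))\<bar> > \<eta>}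
                      \<subseteq> {\<omega>\<in>space M. K0 / sqrt n \<le> W n \<omega>}"
          proof (safe)
            fix \<omega> assume \<omega>: "\<omega> \<in> space M" and gt: "\<bar>sup_norm_on T (rr X m n \<omega>) / (1 / sqrt (real n))\<bar> > \<eta>"
            show "K0 / sqrt n \<le> W n \<omega>"
            proof (rule ccontr)
              assume "\<not> K0 / sqrt n \<le> W n \<omega>"
              then have WK: "W n \<omega> < K0 / s" by (simp add: s_def)
              have "K0 / s < \<delta>0" using s1 s \<delta>0 K0 by (simp add: s_def divide_simps mult.commute)
              then have Wd0: "W n \<omega> \<le> \<delta>0" using WK by simp
              have xb: "sup_norm_on T (rr X m n \<omega>) \<le> Cr * (W n \<omega>)\<^sup>2"
                using good_bounds(2)[OF sig n T m, of X \<omega> \<mu>] Wd0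
                by (simp add: W_def \<delta>0_def Cr_def power_mult_distrib mult_ac)
              have "s * sup_norm_on T (rr X m n \<omega>) \<le> \<eta>"
                by (rule arith_r[OF s W0 WK xb Cr _ \<eta>]) (use s2 in \<open>simp add: s_def\<close>)
              moreover have "\<bar>sup_norm_on T (rr X m n \<omega>) / (1 / sqrt (real n))\<bar> = s * sup_norm_on T (rr X m n \<omega>)"
                using sup_norm_rr_nonneg[OF T, of X m n \<omega>] s by (simp add: s_def)
              ultimately show False using gt by simp
            qed
          qed
          have "measure M {\<omega>\<in>space M. \<bar>sup_norm_on T (rr X m n \<omega>) / (1 / sqrt (real n))\<bar> > \<eta>} \<le> G / K0"
            by (rule meas_bound[OF n K0(1) sub])
          then show "dist (measure M {\<omega>\<in>space M. \<bar>sup_norm_on T (rr X m n \<omega>) / (1 / sqrt (real n))\<bar> > \<eta>}) 0 < \<epsilon>"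
            using K0(2) by simp
        qed
      qed
    qed
    show "big_OP M (\<lambda>n \<omega>. sup_norm_on T (D_disc X m n \<omega>)) (\<lambda>n. 1 / sqrt (real n))"
      unfolding big_OP_def
    proof (intro allI impI)
      fix \<epsilon> :: real assume \<epsilon>: "\<epsilon> > 0"
      obtain K0 where K0: "K0 > 0" "G / K0 < \<epsilon>" using choose[OF \<epsilon>] by blast
      define Cd where "Cd = (2 * real m + 1) * (3 + 1/T)"
      have Cd: "Cd \<ge> 0" using T by (simp add: Cd_def)
      have ev: "eventually (\<lambda>n. n \<ge> 1 \<and> sqrt (real n) > K0 / \<delta>0) sequentially"
        by (intro eventually_conj ev_sqrt) (simp add: eventually_ge_at_top)
      show "\<exists>K. eventually (\<lambda>n. measure M {\<omega>\<in>space M. \<bar>sup_norm_on T (D_disc X m n \<omega>) / (1 / sqrt (real n))\<bar> > K} < \<epsilon>) sequentially"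
      proof (rule exI[of _ "Cd * K0"], rule eventually_mono[OF ev])
        fix n assume nn: "n \<ge> 1 \<and> sqrt (real n) > K0 / \<delta>0"
        then have n: "n \<ge> 1" and s1: "sqrt (real n) > K0 / \<delta>0" by auto
        define s where "s = sqrt (real n)"
        have s: "s > 0" using n by (simp add: s_def)
        have sub: "{\<omega>\<in>space M. \<bar>sup_norm_on T (D_disc X m n \<omega>) / (1 / sqrt (real n))\<bar> > Cd * K0}
                    \<subseteq> {\<omega>\<in>space M. K0 / sqrt n \<le> W n \<omega>}"
        proof (safe)
          fix \<omega> assume \<omega>: "\<omega> \<in> space M" and gt: "\<bar>sup_norm_on T (D_disc X m n \<omega>) / (1 / sqrt (real n))\<bar> > Cd * K0"
          show "K0 / sqrt n \<le> W n \<omega>"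
          proof (rule ccontr)
            assume "\<not> K0 / sqrt n \<le> W n \<omega>"
            then have WK: "W n \<omega> < K0 / s" by (simp add: s_def)
            have "K0 / s < \<delta>0" using s1 s \<delta>0 K0 by (simp add: s_def divide_simps mult.commute)
            then have Wd0: "W n \<omega> \<le> \<delta>0" using WK by simp
            have xb: "sup_norm_on T (D_disc X m n \<omega>) \<le> Cd * W n \<omega>"
              using good_bounds(1)[OF sig n T m, of X \<omega> \<mu>] Wd0
              by (simp add: W_def \<delta>0_def Cd_def mult_ac)
            have "s * sup_norm_on T (D_disc X m n \<omega>) \<le> Cd * K0"
              by (rule arith_d[OF s W0 WK xb Cd])
            moreover have "\<bar>sup_norm_on T (D_disc X m n \<omega>) / (1 / sqrt (real n))\<bar> = s * sup_norm_on T (D_disc X m n \<omega>)"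
              using sup_norm_D_nonneg[OF T, of X m n \<omega>] s by (simp add: s_def)
            ultimately show False using gt by simp
          qed
        qed
        have "measure M {\<omega>\<in>space M. \<bar>sup_norm_on T (D_disc X m n \<omega>) / (1 / sqrt (real n))\<bar> > Cd * K0} \<le> G / K0"
          by (rule meas_bound[OF n K0(1) sub])
        then show "measure M {\<omega>\<in>space M. \<bar>sup_norm_on T (D_disc X m n \<omega>) / (1 / sqrt (real n))\<bar> > Cd * K0} < \<epsilon>"
          using K0(2) by simp
      qed
    qed
    show "\<forall>p::real. p \<ge> 1 \<longrightarrow> unif_integrable M (\<lambda>n \<omega>. sup_norm_on T (rr X m n \<omega>) powr p) {1..}"
    proof (intro allI impI)
      fix p :: real assume p: "p \<ge> 1"
      define B where "B = (Kr m T * 2^2) powr p"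
      have Fb: "\<bar>sup_norm_on T (rr X m i \<omega>) powr p\<bar> \<le> B" if i: "i \<ge> 1" for i \<omega>
      proof -
        have "\<bar>sup_norm_on T (rr X m i \<omega>) powr p\<bar> = sup_norm_on T (rr X m i \<omega>) powr p" by simp
        also have "\<dots> \<le> B" unfolding B_def
          by (rule powr_mono2) (use p sup_norm_rr_nonneg[OF T] rr_always[OF i T m] in auto)
        finally show ?thesis .
      qed
      show "unif_integrable M (\<lambda>n \<omega>. sup_norm_on T (rr X m n \<omega>) powr p) {1..}"
        unfolding unif_integrable_def
      proof (intro conjI ballI allI impI)
        fix i :: nat assume "i \<in> {1..}"
        then have i: "i \<ge> 1" by simp
        show "integrable M (\<lambda>\<omega>. sup_norm_on T (rr X m i \<omega>) powr p)"
          by (rule P.integrable_const_bound[where B=B]) (use Fb[OF i] in auto)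
      next
        fix \<epsilon> :: real assume \<epsilon>: "\<epsilon> > 0"
        show "\<exists>K. \<forall>i\<in>{1..}. (\<integral>\<omega>. \<bar>sup_norm_on T (rr X m i \<omega>) powr p\<bar> *
                 indicator {\<omega>\<in>space M. \<bar>sup_norm_on T (rr X m i \<omega>) powr p\<bar> > K} \<omega> \<partial>M) \<le> \<epsilon>"
        proof (intro exI[of _ B] ballI)
          fix i :: nat assume "i \<in> {1..}"
          then have i: "i \<ge> 1" by simp
          have "(\<integral>\<omega>. \<bar>sup_norm_on T (rr X m i \<omega>) powr p\<bar> *
                 indicator {\<omega>\<in>space M. \<bar>sup_norm_on T (rr X m i \<omega>) powr p\<bar> > B} \<omega> \<partial>M) = (\<integral>\<omega>. 0 \<partial>M)"
            by (rule Bochner_Integration.integral_cong) (use Fb[OF i] in \<open>auto simp: indicator_def not_less\<close>)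
          then show "(\<integral>\<omega>. \<bar>sup_norm_on T (rr X m i \<omega>) powr p\<bar> *
                 indicator {\<omega>\<in>space M. \<bar>sup_norm_on T (rr X m i \<omega>) powr p\<bar> > B} \<omega> \<partial>M) \<le> \<epsilon>"
            using \<epsilon> by simp
        qed
      qed
    qed
  qed
qed

end
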